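(* Let $\beta>1$. Then $m^0_\beta=m^{**}_\beta=\frac{1}{2(1+\beta)}S^2$, where $m^0_\beta=\inf_{\mathcal M^*_\beta}\mathcal E_\beta$ and $m^{**}_\beta=\inf_{\mathcal N^*_\beta}\mathcal E_\beta$.
   Context: $\mathcal D:=D^{1,2}(\mathbb R^4)\times D^{1,2}(\mathbb R^4)$, $\mathcal E_\beta(u,v)=\frac12\|\nabla u\|_{L^2}^2+\frac12\|\nabla v\|_{L^2}^2-\frac14\big(\|u\|_{L^4}^4+\|v\|_{L^4}^4+2\beta\|u^2v^2\|_{L^1}\big)$ on $\mathcal D$. $\mathcal M^*_\beta=\{(u,v)\in\mathcal D\setminus\{(0,0)\}:\langle\mathcal E_\beta'(u,v),(u,v)\rangle=0\}$, $\mathcal N^*_\beta=\{(u,v)\in\mathcal D:u\ne0,v\ne0,\ \langle\mathcal E'_\beta(u,v),(u,0)\rangle=\langle\mathcal E'_\beta(u,v),(0,v)\rangle=0\}$. $S=\inf\{\|\nabla u\|_2^2:u\in D^{1,2}(\mathbb R^4),\|u\|_4=1\}$. *)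

theory Defs
  imports "HOL-Analysis.Analysis"
begin

type_synonym R4 = "real ^ 4"

definition pd :: "4 \<Rightarrow> (R4 \<Rightarrow> real) \<Rightarrow> R4 \<Rightarrow> real" where
  "pd i f x = frechet_derivative f (at x) (axis i 1)"

fun pderivs :: "4 list \<Rightarrow> (R4 \<Rightarrow> real) \<Rightarrow> R4 \<Rightarrow> real" where
  "pderivs [] f = f"
| "pderivs (i # is) f = pd i (pderivs is f)"

definition smooth :: "(R4 \<Rightarrow> real) \<Rightarrow> bool" where
  "smooth f \<longleftrightarrow> (\<forall>is x. pderivs is f differentiable (at x))"

definition test_fn :: "(R4 \<Rightarrow> real) \<Rightarrow> bool" where
  "test_fn \<phi> \<longleftrightarrow> smooth \<phi> \<and> compact (closure {x. \<phi> x \<noteq> 0})"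

definition weak_grad :: "(R4 \<Rightarrow> real) \<Rightarrow> (R4 \<Rightarrow> R4) \<Rightarrow> bool" where
  "weak_grad u G \<longleftrightarrow> G \<in> borel_measurable lebesgue \<and>
     (\<forall>\<phi> i. test_fn \<phi> \<longrightarrow>
        (LINT x|lebesgue. u x * pd i \<phi> x) = - (LINT x|lebesgue. G x $ i * \<phi> x))"

text \<open>D^{1,2}(R^4) = {u in L^4(R^4) : weak gradient in L^2} (2^* = 4 for N = 4).\<close>
definition D12 :: "(R4 \<Rightarrow> real) \<Rightarrow> bool" where
  "D12 u \<longleftrightarrow> u \<in> borel_measurable lebesgue \<and> integrable lebesgue (\<lambda>x. (u x) ^ 4) \<and>
     (\<exists>G. weak_grad u G \<and> integrable lebesgue (\<lambda>x. (norm (G x))\<^sup>2))"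

definition grad :: "(R4 \<Rightarrow> real) \<Rightarrow> R4 \<Rightarrow> R4" where
  "grad u = (SOME G. weak_grad u G \<and> integrable lebesgue (\<lambda>x. (norm (G x))\<^sup>2))"

definition dir :: "(R4 \<Rightarrow> real) \<Rightarrow> real" where
  "dir u = (LINT x|lebesgue. (norm (grad u x))\<^sup>2)"

definition L4p :: "(R4 \<Rightarrow> real) \<Rightarrow> real" where
  "L4p u = (LINT x|lebesgue. (u x) ^ 4)"

definition cross :: "(R4 \<Rightarrow> real) \<Rightarrow> (R4 \<Rightarrow> real) \<Rightarrow> real" where
  "cross u v = (LINT x|lebesgue. (u x)\<^sup>2 * (v x)\<^sup>2)"

text \<open>u \<noteq> 0 as an element of D^{1,2} (not a.e. zero).\<close>
definition nonzero :: "(R4 \<Rightarrow> real) \<Rightarrow> bool" where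
  "nonzero u \<longleftrightarrow> \<not> (AE x in lebesgue. u x = 0)"

definition energy :: "real \<Rightarrow> (R4 \<Rightarrow> real) \<Rightarrow> (R4 \<Rightarrow> real) \<Rightarrow> real" where
  "energy \<beta> u v = dir u / 2 + dir v / 2 - (L4p u + L4p v + 2 * \<beta> * cross u v) / 4"

text \<open>The Nehari-type sets; the pairings with E' are written out explicitly.\<close>
definition Mstar :: "real \<Rightarrow> ((R4 \<Rightarrow> real) \<times> (R4 \<Rightarrow> real)) set" where
  "Mstar \<beta> = {(u, v). D12 u \<and> D12 v \<and> (nonzero u \<or> nonzero v) \<and>
      dir u + dir v - L4p u - L4p v - 2 * \<beta> * cross u v = 0}"

definition Nstar :: "real \<Rightarrow> ((R4 \<Rightarrow> real) \<times> (R4 \<Rightarrow> real)) set" where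
  "Nstar \<beta> = {(u, v). D12 u \<and> D12 v \<and> nonzero u \<and> nonzero v \<and>
      dir u - L4p u - \<beta> * cross u v = 0 \<and> dir v - L4p v - \<beta> * cross u v = 0}"

definition m0 :: "real \<Rightarrow> real" where
  "m0 \<beta> = Inf ((\<lambda>(u, v). energy \<beta> u v) ` Mstar \<beta>)"

definition m2star :: "real \<Rightarrow> real" where
  "m2star \<beta> = Inf ((\<lambda>(u, v). energy \<beta> u v) ` Nstar \<beta>)"

text \<open>Best Sobolev constant; \<parallel>u\<parallel>_4 = 1 iff \<parallel>u\<parallel>_4^4 = 1.\<close>
definition Sob :: real where
  "Sob = Inf {dir u | u. D12 u \<and> L4p u = 1}"

end

theory Submission
  imports Defs "HOL-Computational_Algebra.Polynomial"
begin

lemma poly_exp_at_top: "((\<lambda>x::real. poly q x * exp (- x)) \<longlongrightarrow> 0) at_top"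
proof -
  have "((\<lambda>x::real. \<Sum>i\<le>degree q. coeff q i * (x ^ i / exp x)) \<longlongrightarrow> (\<Sum>i\<le>degree q. coeff q i * 0)) at_top"
    by (intro tendsto_sum tendsto_mult tendsto_const tendsto_power_div_exp_0)
  then show ?thesis
    by (simp add: poly_altdef exp_minus field_simps sum_divide_distrib)
qed

lemma poly_exp_at_right: "((\<lambda>s::real. poly q (1/s) * exp (- (1/s))) \<longlongrightarrow> 0) (at_right 0)"
proof -
  have "filterlim (\<lambda>s::real. 1/s) at_top (at_right 0)"
    using filterlim_inverse_at_top_right by (simp add: inverse_eq_divide)
  from filterlim_compose[OF poly_exp_at_top this] show ?thesis by simp
qed

fun PP :: "nat \<Rightarrow> real poly" where
  "PP 0 = [:1:]"
| "PP (Suc n) = [:0,0,1:] * (PP n - pderiv (PP n))"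

definition gD :: "nat \<Rightarrow> real \<Rightarrow> real" where
  "gD n t = (if t > 0 then poly (PP n) (1/t) * exp (- (1/t)) else 0)"

lemma gD_deriv_pos:
  assumes "t > 0"
  shows "(gD n has_real_derivative gD (Suc n) t) (at t)"
proof -
  let ?f = "\<lambda>t. poly (PP n) (1/t) * exp (- (1/t))"
  have "(?f has_real_derivative
     (poly (pderiv (PP n)) (1/t) * (- 1/t^2)) * exp (- (1/t)) + poly (PP n) (1/t) * (exp (- (1/t)) * (1/t^2))) (at t)"
    using assms
    by (auto intro!: derivative_eq_intros DERIV_chain2[OF poly_DERIV] simp: power2_eq_square field_simps)
  moreover have "(poly (pderiv (PP n)) (1/t) * (- 1/t^2)) * exp (- (1/t)) + poly (PP n) (1/t) * (exp (- (1/t)) * (1/t^2))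
     = gD (Suc n) t"
    using assms by (simp add: gD_def algebra_simps power2_eq_square)
  ultimately have "(?f has_real_derivative gD (Suc n) t) (at t)" by simp
  then show ?thesis
    by (rule has_field_derivative_transform_within_open[where S="{0<..}"]) (use assms in \<open>auto simp: gD_def\<close>)
qed

lemma gD_deriv_neg:
  assumes "t < 0"
  shows "(gD n has_real_derivative gD (Suc n) t) (at t)"
proof -
  have "((\<lambda>_. 0::real) has_real_derivative 0) (at t)" by simp
  then have "((\<lambda>_. 0::real) has_real_derivative gD (Suc n) t) (at t)" using assms by (simp add: gD_def)
  then show ?thesis
    by (rule has_field_derivative_transform_within_open[where S="{..<0}"]) (use assms in \<open>auto simp: gD_def\<close>)
qed

lemma gD_deriv_0: "(gD n has_real_derivative gD (Suc n) 0) (at 0)"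
proof -
  have r: "((\<lambda>s. (gD n s - gD n 0) / (s - 0)) \<longlongrightarrow> 0) (at_right 0)"
  proof -
    have "((\<lambda>s::real. poly ([:0,1:] * PP n) (1/s) * exp (- (1/s))) \<longlongrightarrow> 0) (at_right 0)"
      by (rule poly_exp_at_right)
    then show ?thesis
      by (rule Lim_transform_eventually) (auto simp: eventually_at_right_less gD_def intro!: eventually_mono[OF eventually_at_right_less])
  qed
  have l: "((\<lambda>s. (gD n s - gD n 0) / (s - 0)) \<longlongrightarrow> 0) (at_left 0)"
    by (rule Lim_transform_eventually[where f="\<lambda>_. 0"]) (auto simp: gD_def intro!: eventually_mono[OF eventually_at_left_real[of "-1" 0]])
  have "((\<lambda>s. (gD n s - gD n 0) / (s - 0)) \<longlongrightarrow> 0) (at 0)"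
    using l r by (rule filterlim_split_at)
  then show ?thesis by (simp add: has_field_derivative_iff gD_def)
qed

lemma gD_deriv: "(gD n has_real_derivative gD (Suc n) t) (at t)"
  using gD_deriv_pos gD_deriv_neg gD_deriv_0 by (cases "t > 0"; cases "t < 0") auto

inductive_set SC :: "(R4 \<Rightarrow> real) set" where
  atom: "(\<lambda>x. gD n (c * x $ k + d)) \<in> SC"
| const: "(\<lambda>x. c) \<in> SC"
| add: "f \<in> SC \<Longrightarrow> g \<in> SC \<Longrightarrow> (\<lambda>x. f x + g x) \<in> SC"
| mult: "f \<in> SC \<Longrightarrow> g \<in> SC \<Longrightarrow> (\<lambda>x. f x * g x) \<in> SC"

lemma pd_eq: "(f has_derivative F) (at x) \<Longrightarrow> pd i f x = F (axis i 1)"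
  unfolding pd_def by (metis frechet_derivative_at)

lemma SC_deriv:
  assumes "f \<in> SC"
  shows "\<exists>F. (\<forall>x. (f has_derivative F x) (at x)) \<and> (\<forall>i. (\<lambda>x. F x (axis i 1)) \<in> SC)"
  using assms
proof induction
  case (atom n c k d)
  have "((\<lambda>x. gD n (c * x $ k + d)) has_derivative (\<lambda>h. gD (Suc n) (c * x $ k + d) * (c * h $ k))) (at x)" for x
  proof -
    have 1: "((\<lambda>x::R4. c * x $ k + d) has_derivative (\<lambda>h. c * h $ k)) (at x)"
      by (auto intro!: derivative_eq_intros bounded_linear_imp_has_derivative bounded_linear_vec_nth)
    have 2: "(gD n has_derivative (\<lambda>h. gD (Suc n) (c * x $ k + d) * h)) (at (c * x $ k + d))"
      using gD_deriv[of n "c * x $ k + d"] by (simp add: has_field_derivative_def)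
    from has_derivative_compose[OF 1 2] show ?thesis by (simp add: o_def)
  qed
  moreover have "(\<lambda>x. gD (Suc n) (c * x $ k + d) * (c * axis i 1 $ k)) \<in> SC" for i
    by (intro SC.mult SC.atom SC.const)
  ultimately show ?case
    by (intro exI[of _ "\<lambda>x h. gD (Suc n) (c * x $ k + d) * (c * h $ k)"]) auto
next
  case (const c)
  then show ?case by (intro exI[of _ "\<lambda>x h. 0"]) (auto intro: SC.const)
next
  case (add f g)
  then obtain F G where "\<forall>x. (f has_derivative F x) (at x)" "\<forall>i. (\<lambda>x. F x (axis i 1)) \<in> SC"
    "\<forall>x. (g has_derivative G x) (at x)" "\<forall>i. (\<lambda>x. G x (axis i 1)) \<in> SC" by blast
  then show ?case
    by (intro exI[of _ "\<lambda>x h. F x h + G x h"]) (auto intro!: has_derivative_add SC.add)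
next
  case (mult f g)
  then obtain F G where "\<forall>x. (f has_derivative F x) (at x)" "\<forall>i. (\<lambda>x. F x (axis i 1)) \<in> SC"
    "\<forall>x. (g has_derivative G x) (at x)" "\<forall>i. (\<lambda>x. G x (axis i 1)) \<in> SC" by blast
  then show ?case
    by (intro exI[of _ "\<lambda>x h. f x * G x h + F x h * g x"])
       (auto intro!: has_derivative_mult SC.add SC.mult mult.hyps)
qed

lemma SC_pd: "f \<in> SC \<Longrightarrow> pd i f \<in> SC"
proof -
  assume "f \<in> SC"
  then obtain F where F: "\<forall>x. (f has_derivative F x) (at x)" "\<forall>i. (\<lambda>x. F x (axis i 1)) \<in> SC"
    using SC_deriv by blast
  have "pd i f = (\<lambda>x. F x (axis i 1))" using F(1) pd_eq by blast
  with F(2) show ?thesis by simp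
qed

lemma SC_differentiable: "f \<in> SC \<Longrightarrow> f differentiable (at x)"
  using SC_deriv unfolding differentiable_def by blast

lemma SC_pderivs: "f \<in> SC \<Longrightarrow> pderivs is f \<in> SC"
  by (induction "is") (auto intro: SC_pd)

lemma SC_smooth: "f \<in> SC \<Longrightarrow> smooth f"
  unfolding smooth_def using SC_pderivs SC_differentiable by blast

lemma SC_prod: "finite A \<Longrightarrow> (\<And>j. j \<in> A \<Longrightarrow> f j \<in> SC) \<Longrightarrow> (\<lambda>x. \<Prod>j\<in>A. f j x) \<in> SC"
proof (induction A rule: finite_induct)
  case empty
  then show ?case using SC.const[of 1] by simp
next
  case (insert a A)
  then show ?case by (auto intro!: SC.mult)
qed

lemma SC_continuous: "f \<in> SC \<Longrightarrow> continuous_on UNIV f"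
  using SC_differentiable differentiable_imp_continuous_within continuous_at_imp_continuous_on by blast

lemma cont_meas: "continuous_on UNIV (f :: R4 \<Rightarrow> real) \<Longrightarrow> f \<in> borel_measurable lebesgue"
  by (intro measurable_completion) (simp add: borel_measurable_continuous_onI)

lemma int_ind_cbox: "integrable lebesgue (indicator (cbox a b) :: R4 \<Rightarrow> real)"
proof -
  have "integrable lborel (indicator (cbox a b) :: R4 \<Rightarrow> real)"
    by (intro integrable_real_indicator) (simp_all add: emeasure_lborel_cbox_finite[unfolded infinity_ennreal_def])
  then show ?thesis
    by (subst integrable_completion) auto
qed

lemma tf_cont: "test_fn \<phi> \<Longrightarrow> continuous_on UNIV \<phi>"
proof -
  assume "test_fn \<phi>"
  then have "pderivs [] \<phi> differentiable (at x)" for x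
    unfolding test_fn_def smooth_def by blast
  then have "\<phi> differentiable (at x)" for x by simp
  then show ?thesis
    using differentiable_imp_continuous_within continuous_at_imp_continuous_on by blast
qed

lemma tf_pd_cont: "test_fn \<phi> \<Longrightarrow> continuous_on UNIV (pd i \<phi>)"
proof -
  assume "test_fn \<phi>"
  then have "pderivs [i] \<phi> differentiable (at x)" for x
    unfolding test_fn_def smooth_def by blast
  then have "pd i \<phi> differentiable (at x)" for x by simp
  then show ?thesis
    using differentiable_imp_continuous_within continuous_at_imp_continuous_on by blast
qed

lemma supp_zero: "x \<notin> closure {x. \<phi> x \<noteq> 0} \<Longrightarrow> \<phi> x = 0"
  by (metis (mono_tags, lifting) closure_subset mem_Collect_eq subsetD)

lemma supp_pd_zero:
  assumes "x \<notin> closure {x. \<phi> x \<noteq> 0}"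
  shows "pd i \<phi> x = 0"
proof -
  let ?S = "- closure {x. \<phi> x \<noteq> 0}"
  have "((\<lambda>_. 0::real) has_derivative (\<lambda>_. 0)) (at x)" by simp
  moreover have "open ?S" by auto
  moreover have "x \<in> ?S" using assms by simp
  moreover have "\<And>y. y \<in> ?S \<Longrightarrow> 0 = \<phi> y"
  proof -
    fix y assume "y \<in> ?S"
    then have "y \<notin> closure {x. \<phi> x \<noteq> 0}" by simp
    then show "0 = \<phi> y" using supp_zero by metis
  qed
  ultimately have "(\<phi> has_derivative (\<lambda>_. 0)) (at x)"
    by (rule has_derivative_transform_within_open)
  from pd_eq[OF this] show ?thesis by simp
qed

lemma bdd_cs:
  fixes g :: "R4 \<Rightarrow> real"
  assumes "continuous_on UNIV g" "compact K" "\<And>x. x \<notin> K \<Longrightarrow> g x = 0"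
  shows "\<exists>M. \<forall>x. \<bar>g x\<bar> \<le> M"
proof -
  have "compact (g ` K)"
    using assms by (meson compact_continuous_image continuous_on_subset subset_UNIV)
  then obtain M where M: "\<forall>y\<in>g ` K. norm y \<le> M"
    using compact_imp_bounded bounded_iff by metis
  show ?thesis
    proof (intro exI allI)
    fix x show "\<bar>g x\<bar> \<le> max M 0"
      using M assms(3)[of x] by (cases "x \<in> K") auto
  qed
qed

lemma int_cs:
  fixes f g F :: "R4 \<Rightarrow> real"
  assumes f: "f \<in> borel_measurable lebesgue" and F: "integrable lebesgue F" "\<And>x. \<bar>f x\<bar> \<le> 1 + F x"
    and g: "continuous_on UNIV g" "compact K" "\<And>x. x \<notin> K \<Longrightarrow> g x = 0"
  shows "integrable lebesgue (\<lambda>x. f x * g x)"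
proof -
  obtain M where M: "\<And>x. \<bar>g x\<bar> \<le> M" using bdd_cs[OF g] by blast
  obtain a where a: "K \<subseteq> cbox (-a) a"
    using bounded_subset_cbox_symmetric compact_imp_bounded g(2) by metis
  have gm: "g \<in> borel_measurable lebesgue" using cont_meas g(1) by blast
  show ?thesis
  proof (rule Bochner_Integration.integrable_bound[where f="\<lambda>x. M * (F x + indicator (cbox (-a) a) x)"])
    show "integrable lebesgue (\<lambda>x. M * (F x + indicator (cbox (-a) a) x))"
      using F(1) int_ind_cbox by auto
    show "(\<lambda>x. f x * g x) \<in> borel_measurable lebesgue" using f gm by (rule borel_measurable_times)
    show "AE x in lebesgue. norm (f x * g x) \<le> norm (M * (F x + indicator (cbox (-a) a) x))"
    proof (intro AE_I2)
      fix x
      show "norm (f x * g x) \<le> norm (M * (F x + indicator (cbox (-a) a) x))"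
      proof (cases "x \<in> K")
        case True
        then have "x \<in> cbox (-a) a" using a by auto
        then have "norm (f x * g x) \<le> (1 + F x) * M"
          using M[of x] F(2)[of x] by (auto simp: abs_mult intro!: mult_mono)
        also have "\<dots> \<le> norm (M * (F x + indicator (cbox (-a) a) x))"
          using \<open>x \<in> cbox (-a) a\<close> by (simp add: algebra_simps)
        finally show ?thesis .
      qed (use g(3) in auto)
    qed
  qed
qed

lemma gD0: "gD 0 t = (if t > 0 then exp (- (1/t)) else 0)"
  by (simp add: gD_def)

lemma gD0_nonneg: "0 \<le> gD 0 t" by (simp add: gD0)
lemma gD0_le1: "gD 0 t \<le> 1" by (simp add: gD0)
lemma gD0_pos: "gD 0 t \<noteq> 0 \<longleftrightarrow> t > 0" by (simp add: gD0)

lemma gD0_lim: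
  "(\<lambda>n. gD 0 (t * (real n + 1))) \<longlonglongrightarrow> (if t > 0 then 1 else 0)"
proof (cases "t > 0")
  case True
  have "(\<lambda>n. exp (- (inverse t * inverse (real n + 1)))) \<longlonglongrightarrow> exp (- (inverse t * 0))"
  proof -
    have "(\<lambda>n. inverse (real n + 1)) \<longlonglongrightarrow> 0"
      using LIMSEQ_inverse_real_of_nat by (simp add: add.commute)
    then show ?thesis by (intro tendsto_intros)
  qed
  moreover have "gD 0 (t * (real n + 1)) = exp (- (inverse t * inverse (real n + 1)))" for n
    using True mult_pos_pos[of t "real n + 1"] by (simp add: gD0 field_simps)
  ultimately show ?thesis using True by simp
next
  case False
  then have "gD 0 (t * (real n + 1)) = 0" for n
    using mult_nonpos_nonneg[of t "real n + 1"] by (simp add: gD0)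
  then show ?thesis using False by simp
qed

definition bump :: "R4 \<Rightarrow> R4 \<Rightarrow> nat \<Rightarrow> R4 \<Rightarrow> real" where
  "bump a b n x = (\<Prod>k\<in>UNIV. gD 0 ((x$k - a$k) * (real n + 1)) * gD 0 ((b$k - x$k) * (real n + 1)))"

lemma bump_SC: "bump a b n \<in> SC"
proof -
  have e1: "(x$k - a$k) * (real n + 1) = (real n + 1) * x$k + (- (a$k * (real n + 1)))" for x :: R4 and k
    by (simp add: algebra_simps)
  have e2: "(b$k - x$k) * (real n + 1) = (- (real n + 1)) * x$k + (b$k * (real n + 1))" for x :: R4 and k
    by (simp add: algebra_simps)
  show ?thesis
    unfolding bump_def e1 e2 by (intro SC_prod SC.mult SC.atom) auto
qed

lemma bump_nonneg: "0 \<le> bump a b n x"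
  unfolding bump_def by (intro prod_nonneg mult_nonneg_nonneg gD0_nonneg)

lemma bump_le1: "bump a b n x \<le> 1"
  unfolding bump_def by (intro prod_le_1 conjI mult_nonneg_nonneg gD0_nonneg mult_le_one gD0_le1)

lemma bump_supp: "bump a b n x \<noteq> 0 \<Longrightarrow> x \<in> box a b"
proof -
  assume "bump a b n x \<noteq> 0"
  then have H: "\<forall>k. (x$k - a$k) * (real n + 1) > 0 \<and> (b$k - x$k) * (real n + 1) > 0"
    unfolding bump_def by (auto simp: gD0_pos)
  have "\<forall>k. a$k < x$k \<and> x$k < b$k"
  proof
    fix k
    have p: "0 < real n + 1" by simp
    have "(x$k - a$k) * (real n + 1) > 0" "(b$k - x$k) * (real n + 1) > 0" using H by auto
    then have "x$k - a$k > 0" "b$k - x$k > 0" using p zero_less_mult_pos2 by (metis mult.commute)+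
    then show "a$k < x$k \<and> x$k < b$k" by simp
  qed
  then show ?thesis unfolding mem_box_cart by blast
qed

lemma bump_test: "test_fn (bump a b n)"
proof -
  have "closure {x. bump a b n x \<noteq> 0} \<subseteq> cbox a b"
  proof (rule closure_minimal)
    show "{x. bump a b n x \<noteq> 0} \<subseteq> cbox a b"
      using bump_supp box_subset_cbox by blast
  qed auto
  then have "bounded {x. bump a b n x \<noteq> 0}"
    by (meson bounded_cbox bounded_closure_image bounded_subset closure_subset)
  then show ?thesis
    unfolding test_fn_def using bump_SC SC_smooth compact_closure by blast
qed

lemma bump_lim: "(\<lambda>n. bump a b n x) \<longlonglongrightarrow> indicator (box a b) x"
proof -
  have "(\<lambda>n. bump a b n x) \<longlonglongrightarrow> (\<Prod>k\<in>UNIV. (if x$k - a$k > 0 then 1 else 0) * (if b$k - x$k > 0 then 1 else 0))"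
    unfolding bump_def by (intro tendsto_prod tendsto_mult gD0_lim)
  also have "(\<Prod>k\<in>UNIV. (if x$k - a$k > 0 then 1 else 0) * (if b$k - x$k > 0 then 1 else (0::real))) = indicator (box a b) x"
  proof (cases "x \<in> box a b")
    case True
    then show ?thesis by (auto simp: mem_box_cart indicator_def intro!: prod.neutral)
  next
    case False
    then obtain k where "\<not> (a$k < x$k \<and> x$k < b$k)" by (auto simp: mem_box_cart)
    then show ?thesis using False
      by (auto simp: indicator_def intro!: prod_zero bexI[of _ k])
  qed
  finally show ?thesis .
qed

lemma abs_le_sq1: "\<bar>y::real\<bar> \<le> 1 + y\<^sup>2"
proof (cases "\<bar>y\<bar> \<le> 1")
  case True then show ?thesis by (smt (verit) zero_le_power2)
next
  case False
  have "y\<^sup>2 = \<bar>y\<bar> * \<bar>y\<bar>" by (simp add: power2_eq_square)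
  also have "\<dots> \<ge> \<bar>y\<bar> * 1" using False by (intro mult_left_mono) auto
  finally show ?thesis by simp
qed

lemma int_abs_ind:
  fixes h :: "R4 \<Rightarrow> real"
  assumes h: "h \<in> borel_measurable lebesgue" "integrable lebesgue (\<lambda>x. (h x)\<^sup>2)"
  shows "integrable lebesgue (\<lambda>x. \<bar>h x\<bar> * indicator (cbox a b) x)"
proof (rule Bochner_Integration.integrable_bound[where f="\<lambda>x. (h x)\<^sup>2 + indicator (cbox a b) x"])
  show "integrable lebesgue (\<lambda>x. (h x)\<^sup>2 + indicator (cbox a b) x)"
    using h(2) int_ind_cbox by auto
  show "(\<lambda>x. \<bar>h x\<bar> * indicator (cbox a b) x) \<in> borel_measurable lebesgue"
    using h(1) by (intro borel_measurable_times borel_measurable_abs borel_measurable_indicator) auto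
  show "AE x in lebesgue. norm (\<bar>h x\<bar> * indicator (cbox a b) x) \<le> norm ((h x)\<^sup>2 + indicator (cbox a b) x)"
    using abs_le_sq1 by (intro AE_I2) (auto simp: indicator_def add.commute)
qed

lemma box_int_zero:
  fixes h :: "R4 \<Rightarrow> real"
  assumes h: "h \<in> borel_measurable lebesgue" "integrable lebesgue (\<lambda>x. (h x)\<^sup>2)"
    and zero: "\<And>\<phi>. test_fn \<phi> \<Longrightarrow> (LINT x|lebesgue. h x * \<phi> x) = 0"
  shows "(LINT x|lebesgue. h x * indicator (box a b) x) = 0"
proof -
  have "(\<lambda>n. LINT x|lebesgue. h x * bump a b n x) \<longlonglongrightarrow> (LINT x|lebesgue. h x * indicator (box a b) x)"
  proof (rule integral_dominated_convergence[where w="\<lambda>x. \<bar>h x\<bar> * indicator (cbox a b) x"])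
    show "(\<lambda>x. h x * indicator (box a b) x) \<in> borel_measurable lebesgue"
      using h(1) by (intro borel_measurable_times borel_measurable_indicator) auto
    show "(\<lambda>x. h x * bump a b n x) \<in> borel_measurable lebesgue" for n
      using h(1) cont_meas[OF SC_continuous[OF bump_SC]] by (rule borel_measurable_times)
    show "integrable lebesgue (\<lambda>x. \<bar>h x\<bar> * indicator (cbox a b) x)"
      using int_abs_ind h by blast
    show "AE x in lebesgue. (\<lambda>n. h x * bump a b n x) \<longlonglongrightarrow> h x * indicator (box a b) x"
      by (intro AE_I2 tendsto_mult tendsto_const bump_lim)
    show "AE x in lebesgue. norm (h x * bump a b n x) \<le> \<bar>h x\<bar> * indicator (cbox a b) x" for n
    proof (intro AE_I2)
      fix x
      show "norm (h x * bump a b n x) \<le> \<bar>h x\<bar> * indicator (cbox a b) x"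
      proof (cases "x \<in> cbox a b")
        case True
        have "norm (h x * bump a b n x) = \<bar>h x\<bar> * bump a b n x"
          using bump_nonneg[of a b n x] by (simp add: abs_mult)
        also have "\<dots> \<le> \<bar>h x\<bar> * 1"
          using bump_le1[of a b n x] by (intro mult_left_mono) auto
        finally show ?thesis using True by simp
      next
        case False
        then have "x \<notin> box a b" using box_subset_cbox by (metis subsetD)
        then have "bump a b n x = 0" using bump_supp by (metis)
        then show ?thesis by simp
      qed
    qed
  qed
  moreover have "(LINT x|lebesgue. h x * bump a b n x) = 0" for n
    using zero bump_test by blast
  ultimately have "(\<lambda>n. 0::real) \<longlonglongrightarrow> (LINT x|lebesgue. h x * indicator (box a b) x)"
    by simp
  then show ?thesis using LIMSEQ_unique tendsto_const by metis
qed

lemma sets_borel_box: "sets (borel :: R4 measure) = sigma_sets UNIV (range (\<lambda>(a, b). box a b))"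
  by (subst borel_eq_box) (simp add: sets_measure_of)

lemma FL_box:
  fixes h :: "R4 \<Rightarrow> real"
  assumes h: "h \<in> borel_measurable lebesgue" "integrable lebesgue (\<lambda>x. (h x)\<^sup>2)"
    and boxes: "\<And>a b. (LINT x|lebesgue. h x * indicator (box a b) x) = 0"
    and h'm: "h' \<in> borel_measurable lborel" and hh': "AE x in lborel. h x = h' x"
  shows "AE x in lborel. x \<in> box (-c) c \<longrightarrow> h' x = 0"
proof -
  let ?B = "box (-c) c"
  have G: "Int_stable (range (\<lambda>(a, b). box a b :: R4 set))"
    by (auto simp: Int_stable_def box_Int_box)
  have boxes': "(LINT x|lborel. h' x * indicator (box a b) x) = 0" for a b
  proof -
    have "(LINT x|lborel. h' x * indicator (box a b) x) = (LINT x|lebesgue. h' x * indicator (box a b) x)"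
      by (rule integral_completion[symmetric]) (use h'm in measurable)
    also have "\<dots> = (LINT x|lebesgue. h x * indicator (box a b) x)"
    proof (rule integral_cong_AE)
      show "(\<lambda>x. h' x * indicator (box a b) x) \<in> borel_measurable lebesgue"
        by (intro measurable_completion) (use h'm in measurable)
      show "(\<lambda>x. h x * indicator (box a b) x) \<in> borel_measurable lebesgue"
        using h(1) by (intro borel_measurable_times borel_measurable_indicator) auto
      show "AE x in lebesgue. h' x * indicator (box a b) x = h x * indicator (box a b) x"
        using AE_completion[OF hh'] by eventually_elim simp
    qed
    finally show ?thesis using boxes by simp
  qed
  have Gsub: "range (\<lambda>(a, b). box a b :: R4 set) \<subseteq> Pow UNIV" by auto
  define f where "f x = h' x * indicator ?B x" for x
  have fm: "f \<in> borel_measurable lborel" unfolding f_def using h'm by measurable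
  have intf: "integrable lborel f"
  proof -
    have "integrable lebesgue (\<lambda>x. h x * indicator ?B x)"
    proof (rule Bochner_Integration.integrable_bound[where f="\<lambda>x. \<bar>h x\<bar> * indicator (cbox (-c) c) x"])
      show "integrable lebesgue (\<lambda>x. \<bar>h x\<bar> * indicator (cbox (-c) c) x)" using int_abs_ind h by blast
      show "(\<lambda>x. h x * indicator ?B x) \<in> borel_measurable lebesgue"
        using h(1) by (intro borel_measurable_times borel_measurable_indicator) auto
      show "AE x in lebesgue. norm (h x * indicator ?B x) \<le> norm (\<bar>h x\<bar> * indicator (cbox (-c) c) x)"
        by (intro AE_I2) (use box_subset_cbox in \<open>auto simp: indicator_def\<close>)
    qed
    then have "integrable lebesgue f"
      by (rule integrable_cong_AE_imp) (use fm hh' in \<open>auto intro: AE_completion measurable_completion simp: f_def\<close>)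
    then show ?thesis using fm by (simp add: integrable_completion)
  qed
  have P: "set_lebesgue_integral lborel A f = 0" if A: "A \<in> sigma_sets UNIV (range (\<lambda>(a, b). box a b))" for A
    using G Gsub A
  proof (induction rule: sigma_sets_induct_disjoint)
    case (basic A)
    then obtain a b where Aab: "A = box a b" by auto
    then have "A \<inter> ?B \<in> range (\<lambda>(a, b). box a b)" using G unfolding Int_stable_def by auto
    then obtain a' b' where eq: "A \<inter> ?B = box a' b'" by auto
    have mem: "x \<in> box a' b' \<longleftrightarrow> x \<in> A \<and> x \<in> ?B" for x using eq by blast
    have "set_lebesgue_integral lborel A f = (LINT x|lborel. h' x * indicator (box a' b') x)"
      unfolding set_lebesgue_integral_def f_def
      by (intro Bochner_Integration.integral_cong refl) (simp add: indicator_def mem)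
    then show ?case using boxes' by simp
  next
    case empty
    then show ?case by (simp add: set_lebesgue_integral_def)
  next
    case (compl A)
    have Am: "A \<in> sets lborel" using compl.hyps sets_borel_box by simp
    have "set_lebesgue_integral lborel (UNIV - A) f = (LINT x|lborel. f x - indicator A x * f x)"
      unfolding set_lebesgue_integral_def
      by (intro Bochner_Integration.integral_cong) (auto simp: indicator_def)
    also have "\<dots> = (LINT x|lborel. f x) - (LINT x|lborel. indicator A x * f x)"
      using integrable_mult_indicator[OF Am intf] intf by (simp add: Bochner_Integration.integral_diff)
    also have "(LINT x|lborel. f x) = 0" unfolding f_def using boxes' by simp
    also have "(LINT x|lborel. indicator A x * f x) = 0"
      using compl.IH by (simp add: set_lebesgue_integral_def)
    finally show ?case by simp
  next
    case (union A)
    have Am: "A i \<in> sets lborel" for i using union.hyps sets_borel_box by auto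
    have "set_integrable lborel (\<Union>i. A i) f"
      unfolding set_integrable_def by (rule integrable_mult_indicator) (use Am intf in auto)
    then have "set_lebesgue_integral lborel (\<Union>i. A i) f = (\<Sum>i. set_lebesgue_integral lborel (A i) f)"
      by (intro lebesgue_integral_countable_add Am)
         (use union.hyps(1) in \<open>auto simp: disjoint_family_on_def\<close>)
    then show ?case using union.IH by simp
  qed
  have "AE x in lborel. f x = 0"
  proof (rule density_unique_real)
    show "integrable lborel f" by (rule intf)
    show "integrable lborel (\<lambda>x. 0::real)" by simp
    fix A :: "R4 set" assume "A \<in> sets lborel"
    then have "A \<in> sigma_sets UNIV (range (\<lambda>(a, b). box a b))" using sets_borel_box sets_lborel by metis
    then show "set_lebesgue_integral lborel A f = set_lebesgue_integral lborel A (\<lambda>x. 0)"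
      using P by (simp add: set_lebesgue_integral_def)
  qed
  then show ?thesis by eventually_elim (auto simp: f_def indicator_def)
qed

lemma FL_from_boxes:
  fixes h :: "R4 \<Rightarrow> real"
  assumes h: "h \<in> borel_measurable lebesgue" "integrable lebesgue (\<lambda>x. (h x)\<^sup>2)"
    and boxes: "\<And>a b. (LINT x|lebesgue. h x * indicator (box a b) x) = 0"
  shows "AE x in lebesgue. h x = 0"
proof -
  obtain h' where h'm: "h' \<in> borel_measurable lborel" and hh': "AE x in lborel. h x = h' x"
    using completion_ex_borel_measurable_real[OF h(1)] by blast
  have nb: "AE x in lborel. x \<in> box (- (\<chi> i. real n)) (\<chi> i. real n) \<longrightarrow> h' x = 0" for n
    by (rule FL_box[OF h boxes h'm hh'])
  have "AE x in lborel. \<forall>n. x \<in> box (- (\<chi> i. real n)) (\<chi> i. real n) \<longrightarrow> h' x = 0"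
    by (rule AE_all_countable[THEN iffD2]) (use nb in blast)
  then have "AE x in lborel. h x = 0"
    using hh'
  proof eventually_elim
    case (elim x)
    obtain n where n: "norm x < real n" using reals_Archimedean2 by blast
    have "x \<in> box (- (\<chi> i. real n)) (\<chi> i. real n)"
      unfolding mem_box_cart
    proof
      fix i
      have "\<bar>x$i\<bar> < real n" using component_le_norm_cart[of x i] n by linarith
      then show "(- (\<chi> i. real n)) $ i < x $ i \<and> x $ i < (\<chi> i. real n) $ i" by auto
    qed
    then have "h' x = 0" using elim(1) by blast
    then show ?case using elim(2) by simp
  qed
  then show ?thesis by (rule AE_completion)
qed

lemma wg_meas: "weak_grad u G \<Longrightarrow> (\<lambda>x. G x $ i) \<in> borel_measurable lebesgue"
  unfolding weak_grad_def using measurable_compose[OF _ borel_measurable_nth] by blast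

lemma wg_meas_vec: "weak_grad u G \<Longrightarrow> G \<in> borel_measurable lebesgue"
  unfolding weak_grad_def by blast

lemma comp_sq_le: "(y $ i)\<^sup>2 \<le> (norm (y :: R4))\<^sup>2"
proof -
  have "\<bar>y $ i\<bar>\<^sup>2 \<le> (norm y)\<^sup>2"
    by (intro power_mono component_le_norm_cart) auto
  then show ?thesis by simp
qed

lemma comp_abs_le: "\<bar>y $ i\<bar> \<le> 1 + (norm (y :: R4))\<^sup>2"
  using component_le_norm_cart[of y i] abs_le_sq1[of "norm y"] by simp

lemma tf_props:
  assumes "test_fn \<phi>"
  shows "continuous_on UNIV \<phi>" "compact (closure {x. \<phi> x \<noteq> 0})"
    "\<And>x. x \<notin> closure {x. \<phi> x \<noteq> 0} \<Longrightarrow> \<phi> x = 0"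
  using assms tf_cont supp_zero unfolding test_fn_def by auto

lemma int_Gphi:
  assumes "weak_grad u G" "integrable lebesgue (\<lambda>x. (norm (G x))\<^sup>2)" "test_fn \<phi>"
  shows "integrable lebesgue (\<lambda>x. G x $ i * \<phi> x)"
  by (rule int_cs[OF wg_meas[OF assms(1)] assms(2) comp_abs_le tf_props[OF assms(3)]])

lemma wg_unique:
  assumes G1: "weak_grad u G1" "integrable lebesgue (\<lambda>x. (norm (G1 x))\<^sup>2)"
    and G2: "weak_grad u G2" "integrable lebesgue (\<lambda>x. (norm (G2 x))\<^sup>2)"
  shows "AE x in lebesgue. G1 x = G2 x"
proof -
  have "AE x in lebesgue. G1 x $ i - G2 x $ i = 0" for i
  proof (rule FL_from_boxes)
    let ?h = "\<lambda>x. G1 x $ i - G2 x $ i"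
    show hm: "?h \<in> borel_measurable lebesgue"
      using wg_meas[OF G1(1)] wg_meas[OF G2(1)] by (rule borel_measurable_diff)
    show hi: "integrable lebesgue (\<lambda>x. (?h x)\<^sup>2)"
    proof (rule Bochner_Integration.integrable_bound[where f="\<lambda>x. 2 * (norm (G1 x))\<^sup>2 + 2 * (norm (G2 x))\<^sup>2"])
      show "integrable lebesgue (\<lambda>x. 2 * (norm (G1 x))\<^sup>2 + 2 * (norm (G2 x))\<^sup>2)"
        using G1(2) G2(2) by auto
      show "(\<lambda>x. (?h x)\<^sup>2) \<in> borel_measurable lebesgue" using hm by measurable
      show "AE x in lebesgue. norm ((?h x)\<^sup>2) \<le> norm (2 * (norm (G1 x))\<^sup>2 + 2 * (norm (G2 x))\<^sup>2)"
      proof (intro AE_I2)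
        fix x
        have "(?h x)\<^sup>2 \<le> 2 * (G1 x $ i)\<^sup>2 + 2 * (G2 x $ i)\<^sup>2"
        proof -
          have e: "2 * (G1 x $ i)\<^sup>2 + 2 * (G2 x $ i)\<^sup>2 - (?h x)\<^sup>2 = (G1 x $ i + G2 x $ i)\<^sup>2"
            by (simp add: power2_eq_square algebra_simps)
          show ?thesis using e zero_le_power2[of "G1 x $ i + G2 x $ i"] by linarith
        qed
        also have "\<dots> \<le> 2 * (norm (G1 x))\<^sup>2 + 2 * (norm (G2 x))\<^sup>2"
          using comp_sq_le[of "G1 x" i] comp_sq_le[of "G2 x" i] by linarith
        finally show "norm ((?h x)\<^sup>2) \<le> norm (2 * (norm (G1 x))\<^sup>2 + 2 * (norm (G2 x))\<^sup>2)"
          by simp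
      qed
    qed
    have "(LINT x|lebesgue. ?h x * \<phi> x) = 0" if \<phi>: "test_fn \<phi>" for \<phi>
    proof -
      have i1: "integrable lebesgue (\<lambda>x. G1 x $ i * \<phi> x)" using int_Gphi G1 \<phi> by blast
      have i2: "integrable lebesgue (\<lambda>x. G2 x $ i * \<phi> x)" using int_Gphi G2 \<phi> by blast
      have "(LINT x|lebesgue. ?h x * \<phi> x) = (LINT x|lebesgue. G1 x $ i * \<phi> x - G2 x $ i * \<phi> x)"
        by (simp add: algebra_simps)
      also have "\<dots> = (LINT x|lebesgue. G1 x $ i * \<phi> x) - (LINT x|lebesgue. G2 x $ i * \<phi> x)"
        using i1 i2 by (rule Bochner_Integration.integral_diff)
      also have "\<dots> = 0"
      proof -
        have e1: "(LINT x|lebesgue. u x * pd i \<phi> x) = - (LINT x|lebesgue. G1 x $ i * \<phi> x)"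
          using G1(1) \<phi> unfolding weak_grad_def by simp
        have e2: "(LINT x|lebesgue. u x * pd i \<phi> x) = - (LINT x|lebesgue. G2 x $ i * \<phi> x)"
          using G2(1) \<phi> unfolding weak_grad_def by simp
        from e1 e2 show ?thesis by linarith
      qed
      finally show ?thesis .
    qed
    then show "(LINT x|lebesgue. ?h x * indicator (box a b) x) = 0" for a b
      using box_int_zero[OF hm hi] by blast
  qed
  then have "AE x in lebesgue. \<forall>i\<in>UNIV. G1 x $ i - G2 x $ i = 0"
    by (intro AE_finite_allI) auto
  then show ?thesis by eventually_elim (simp add: vec_eq_iff)
qed

lemma grad_ok: "D12 u \<Longrightarrow> weak_grad u (grad u) \<and> integrable lebesgue (\<lambda>x. (norm (grad u x))\<^sup>2)"
proof -
  assume "D12 u"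
  then have "\<exists>G. weak_grad u G \<and> integrable lebesgue (\<lambda>x. (norm (G x))\<^sup>2)"
    unfolding D12_def by simp
  then show ?thesis unfolding grad_def by (rule someI_ex)
qed

lemma norm_sq_meas: "G \<in> borel_measurable lebesgue \<Longrightarrow> (\<lambda>x. (norm (G x :: R4))\<^sup>2) \<in> borel_measurable lebesgue"
  by measurable

lemma dir_eq:
  assumes "D12 u" "weak_grad u G" "integrable lebesgue (\<lambda>x. (norm (G x))\<^sup>2)"
  shows "dir u = (LINT x|lebesgue. (norm (G x))\<^sup>2)"
proof -
  have g: "weak_grad u (grad u)" "integrable lebesgue (\<lambda>x. (norm (grad u x))\<^sup>2)" using grad_ok assms(1) by auto
  have "AE x in lebesgue. grad u x = G x" using wg_unique[OF g assms(2,3)] .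
  then have "AE x in lebesgue. (norm (grad u x))\<^sup>2 = (norm (G x))\<^sup>2" by eventually_elim simp
  moreover have "(\<lambda>x. (norm (grad u x))\<^sup>2) \<in> borel_measurable lebesgue"
    using norm_sq_meas wg_meas_vec g(1) by blast
  moreover have "(\<lambda>x. (norm (G x))\<^sup>2) \<in> borel_measurable lebesgue"
    using norm_sq_meas wg_meas_vec assms(2) by blast
  ultimately show ?thesis unfolding dir_def
    by (intro integral_cong_AE)
qed

lemma D12_meas: "D12 u \<Longrightarrow> u \<in> borel_measurable lebesgue"
  unfolding D12_def by simp
lemma D12_int4: "D12 u \<Longrightarrow> integrable lebesgue (\<lambda>x. (u x)^4)"
  unfolding D12_def by simp

lemma wg_scale:
  assumes "weak_grad u G"
  shows "weak_grad (\<lambda>x. c * u x) (\<lambda>x. c *\<^sub>R G x)"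
  unfolding weak_grad_def
proof (intro conjI allI impI)
  show "(\<lambda>x. c *\<^sub>R G x) \<in> borel_measurable lebesgue"
    using wg_meas_vec[OF assms] by measurable
  fix \<phi> i assume "test_fn \<phi>"
  then have e: "(LINT x|lebesgue. u x * pd i \<phi> x) = - (LINT x|lebesgue. G x $ i * \<phi> x)"
    using assms unfolding weak_grad_def by simp
  have "(LINT x|lebesgue. c * u x * pd i \<phi> x) = (LINT x|lebesgue. c * (u x * pd i \<phi> x))"
    by (simp add: mult.assoc)
  also have "\<dots> = c * (LINT x|lebesgue. u x * pd i \<phi> x)" by (rule integral_mult_right_zero)
  also have "\<dots> = - (c * (LINT x|lebesgue. G x $ i * \<phi> x))" using e by simp
  also have "c * (LINT x|lebesgue. G x $ i * \<phi> x) = (LINT x|lebesgue. c * (G x $ i * \<phi> x))"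
    by (rule integral_mult_right_zero[symmetric])
  also have "\<dots> = (LINT x|lebesgue. (c *\<^sub>R G x) $ i * \<phi> x)"
    by (simp add: mult.assoc)
  finally show "(LINT x|lebesgue. c * u x * pd i \<phi> x) = - (LINT x|lebesgue. (c *\<^sub>R G x) $ i * \<phi> x)" .
qed

lemma D12_scale:
  assumes "D12 u"
  shows "D12 (\<lambda>x. c * u x)" "dir (\<lambda>x. c * u x) = c\<^sup>2 * dir u"
    "L4p (\<lambda>x. c * u x) = c^4 * L4p u"
proof -
  have g: "weak_grad u (grad u)" "integrable lebesgue (\<lambda>x. (norm (grad u x))\<^sup>2)" using grad_ok assms by auto
  have wg: "weak_grad (\<lambda>x. c * u x) (\<lambda>x. c *\<^sub>R grad u x)" by (rule wg_scale[OF g(1)])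
  have nsq: "(norm (c *\<^sub>R grad u x))\<^sup>2 = c\<^sup>2 * (norm (grad u x))\<^sup>2" for x
    by (simp add: power_mult_distrib)
  have ig: "integrable lebesgue (\<lambda>x. (norm (c *\<^sub>R grad u x))\<^sup>2)"
    unfolding nsq using g(2) by simp
  have p4: "(c * u x)^4 = c^4 * (u x)^4" for x by (simp add: power_mult_distrib)
  show D: "D12 (\<lambda>x. c * u x)"
    unfolding D12_def p4 using D12_meas[OF assms] D12_int4[OF assms] wg ig by auto
  show "dir (\<lambda>x. c * u x) = c\<^sup>2 * dir u"
    unfolding dir_eq[OF D wg ig] nsq dir_def by simp
  show "L4p (\<lambda>x. c * u x) = c^4 * L4p u"
    unfolding L4p_def p4 by (rule integral_mult_right_zero)
qed

lemma cross_self_scale: "cross (\<lambda>x. c * u x) (\<lambda>x. c * u x) = c^4 * L4p u"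
proof -
  have pt: "(c * u x)\<^sup>2 * (c * u x)\<^sup>2 = c^4 * (u x)^4" for x by algebra
  show ?thesis unfolding cross_def L4p_def pt by (rule integral_mult_right_zero)
qed

lemma dir_nonneg: "dir u \<ge> 0"
  unfolding dir_def by (rule Bochner_Integration.integral_nonneg) simp
lemma L4p_nonneg: "L4p u \<ge> 0"
  unfolding L4p_def by (rule Bochner_Integration.integral_nonneg) simp
lemma cross_nonneg: "cross u v \<ge> 0"
  unfolding cross_def by (rule Bochner_Integration.integral_nonneg) simp

lemma L4p_zero_iff:
  assumes "D12 u"
  shows "L4p u = 0 \<longleftrightarrow> \<not> nonzero u"
proof -
  have "L4p u = 0 \<longleftrightarrow> (AE x in lebesgue. (u x)^4 = 0)"
    unfolding L4p_def by (rule integral_nonneg_eq_0_iff_AE) (use D12_int4[OF assms] in auto)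
  also have "\<dots> \<longleftrightarrow> (AE x in lebesgue. u x = 0)" by simp
  finally show ?thesis unfolding nonzero_def by simp
qed

lemma cross_zero:
  assumes "D12 u" "\<not> nonzero u"
  shows "cross u v = 0"
proof -
  have "AE x in lebesgue. u x = 0" using assms(2) unfolding nonzero_def by simp
  then have "AE x in lebesgue. (u x)\<^sup>2 * (v x)\<^sup>2 = 0" by eventually_elim simp
  then show ?thesis unfolding cross_def by (simp add: integral_eq_zero_AE)
qed

lemma cross_bound_pt:
  assumes "s > 0"
  shows "(a::real)\<^sup>2 * b\<^sup>2 \<le> (s * a^4 + b^4 / s) / 2"
proof -
  have "0 \<le> (s * a\<^sup>2 - b\<^sup>2)\<^sup>2 / s" using assms by simp
  also have "(s * a\<^sup>2 - b\<^sup>2)\<^sup>2 / s = s * a^4 - 2 * a\<^sup>2 * b\<^sup>2 + b^4 / s"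
    using assms by (simp add: power2_eq_square field_simps) (simp add: algebra_simps numeral_eq_Suc)
  finally show ?thesis by simp
qed

lemma cross_int:
  assumes "D12 u" "D12 v"
  shows "integrable lebesgue (\<lambda>x. (u x)\<^sup>2 * (v x)\<^sup>2)"
proof (rule Bochner_Integration.integrable_bound[where f="\<lambda>x. ((u x)^4 + (v x)^4) / 2"])
  show "integrable lebesgue (\<lambda>x. ((u x)^4 + (v x)^4) / 2)"
    using D12_int4[OF assms(1)] D12_int4[OF assms(2)] by auto
  show "(\<lambda>x. (u x)\<^sup>2 * (v x)\<^sup>2) \<in> borel_measurable lebesgue"
    using D12_meas[OF assms(1)] D12_meas[OF assms(2)] by measurable
  show "AE x in lebesgue. norm ((u x)\<^sup>2 * (v x)\<^sup>2) \<le> norm (((u x)^4 + (v x)^4) / 2)"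
    using cross_bound_pt[of 1] by (intro AE_I2) simp
qed

lemma cross_le:
  assumes "D12 u" "D12 v"
  shows "cross u v \<le> sqrt (L4p u) * sqrt (L4p v)"
proof (cases "nonzero u \<and> nonzero v")
  case True
  let ?A = "L4p u" and ?B = "L4p v"
  have A: "?A > 0" using L4p_zero_iff[OF assms(1)] L4p_nonneg[of u] True by fastforce
  have B: "?B > 0" using L4p_zero_iff[OF assms(2)] L4p_nonneg[of v] True by fastforce
  define s where "s = sqrt ?B / sqrt ?A"
  have s: "s > 0" using A B by (simp add: s_def)
  have "cross u v \<le> (LINT x|lebesgue. (s * (u x)^4 + (v x)^4 / s) / 2)"
    unfolding cross_def
    by (intro integral_mono cross_int assms cross_bound_pt s)
       (use D12_int4[OF assms(1)] D12_int4[OF assms(2)] in auto)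
  also have "\<dots> = (s * ?A + ?B / s) / 2"
    unfolding L4p_def using D12_int4[OF assms(1)] D12_int4[OF assms(2)] by simp
  also have "\<dots> = sqrt ?A * sqrt ?B"
  proof -
    have "s * ?A = sqrt ?A * sqrt ?B" using A B unfolding s_def
      by (simp add: field_simps)
    moreover have "?B / s = sqrt ?A * sqrt ?B" using A B unfolding s_def
      by (simp add: field_simps)
    ultimately show ?thesis by simp
  qed
  finally show ?thesis .
next
  case False
  have "cross u v = 0"
  proof (cases "nonzero u")
    case True
    then have "\<not> nonzero v" using False by simp
    then have "cross v u = 0" using cross_zero[OF assms(2)] by blast
    then show ?thesis unfolding cross_def by (simp add: mult.commute)
  next
    case False
    then show ?thesis using cross_zero[OF assms(1)] by blast
  qed
  then show ?thesis using L4p_nonneg[of u] L4p_nonneg[of v] by simp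
qed

lemma lebesgue_transl:
  shows "lebesgue = distr lebesgue lebesgue (\<lambda>x. t + (x::R4))"
    and "(\<lambda>x. t + (x::R4)) \<in> lebesgue \<rightarrow>\<^sub>M lebesgue"
proof -
  have T: "(\<lambda>x. t + (\<Sum>j\<in>Basis. (1 * (x \<bullet> j)) *\<^sub>R j)) = (\<lambda>x. t + (x::R4))"
    by (simp add: euclidean_representation)
  have "lebesgue = density (distr lebesgue lebesgue (\<lambda>x. t + (\<Sum>j\<in>Basis. (1 * (x \<bullet> j)) *\<^sub>R j))) (\<lambda>_. (\<Prod>j\<in>(Basis::R4 set). \<bar>1::real\<bar>))"
    by (rule lebesgue_affine_euclidean) simp
  then show "lebesgue = distr lebesgue lebesgue (\<lambda>x. t + (x::R4))"
    unfolding T by (simp add: density_1)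
  have "(\<lambda>x. t + (\<Sum>j\<in>Basis. (1 * (x \<bullet> j)) *\<^sub>R j)) \<in> (lebesgue :: R4 measure) \<rightarrow>\<^sub>M lebesgue"
    by (rule lebesgue_affine_measurable) simp
  then show "(\<lambda>x. t + (x::R4)) \<in> lebesgue \<rightarrow>\<^sub>M lebesgue" unfolding T .
qed

lemma integral_transl:
  fixes f :: "R4 \<Rightarrow> real"
  assumes "f \<in> borel_measurable lebesgue"
  shows "(LINT x|lebesgue. f (t + x)) = (LINT x|lebesgue. f x)"
proof -
  have "(LINT x|lebesgue. f x) = integral\<^sup>L (distr lebesgue lebesgue (\<lambda>x. t + x)) f"
    using lebesgue_transl(1)[of t] by simp
  also have "\<dots> = (LINT x|lebesgue. f (t + x))"
    by (rule integral_distr[OF lebesgue_transl(2) assms])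
  finally show ?thesis by simp
qed

lemma line_deriv:
  fixes w :: "R4 \<Rightarrow> real"
  assumes der: "\<And>y. (w has_derivative W y) (at y)"
  shows "((\<lambda>t. w (x + t *\<^sub>R e)) has_real_derivative W (x + t *\<^sub>R e) e) (at t)"
proof -
  have 1: "((\<lambda>t. x + t *\<^sub>R e) has_derivative (\<lambda>s. s *\<^sub>R e)) (at t)"
    by (auto intro!: derivative_eq_intros)
  have "((\<lambda>t. w (x + t *\<^sub>R e)) has_derivative (\<lambda>s. W (x + t *\<^sub>R e) (s *\<^sub>R e))) (at t)"
    using has_derivative_compose[OF 1 der] by (simp add: o_def)
  moreover have "(\<lambda>s. W (x + t *\<^sub>R e) (s *\<^sub>R e)) = (*) (W (x + t *\<^sub>R e) e)"
  proof
    fix s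
    have "linear (W (x + t *\<^sub>R e))" using der has_derivative_linear by blast
    then have "W (x + t *\<^sub>R e) (s *\<^sub>R e) = s *\<^sub>R W (x + t *\<^sub>R e) e" by (rule linear_scale)
    then show "W (x + t *\<^sub>R e) (s *\<^sub>R e) = W (x + t *\<^sub>R e) e * s" by simp
  qed
  ultimately show ?thesis by (simp add: has_field_derivative_def)
qed

lemma out_box:
  fixes R :: R4
  assumes "y \<notin> cbox (-(R + (\<chi> k. 1))) (R + (\<chi> k. 1))" "\<bar>h\<bar> \<le> 1"
  shows "y + h *\<^sub>R axis i 1 \<notin> cbox (-R) R"
proof
  assume a: "y + h *\<^sub>R axis i 1 \<in> cbox (-R) R"
  have "y \<in> cbox (-(R + (\<chi> k. 1))) (R + (\<chi> k. 1))"
    unfolding mem_box_cart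
  proof
    fix k
    have "-R$k \<le> y$k + h * (axis i 1 :: R4) $ k \<and> y$k + h * (axis i 1 :: R4) $ k \<le> R$k"
      using a unfolding mem_box_cart by simp
    moreover have "\<bar>h * (axis i 1 :: R4) $ k\<bar> \<le> 1" using assms(2) by (simp add: axis_def)
    ultimately show "(-(R + (\<chi> k. 1)))$k \<le> y$k \<and> y$k \<le> (R + (\<chi> k. 1))$k" by auto
  qed
  then show False using assms(1) by simp
qed

lemma cs_integrable:
  fixes w :: "R4 \<Rightarrow> real"
  assumes "continuous_on UNIV w" "compact K" "\<And>y. y \<notin> K \<Longrightarrow> w y = 0"
  shows "integrable lebesgue w"
proof -
  have "integrable lebesgue (\<lambda>x. 1 * w x)"
    by (rule int_cs[where F="\<lambda>_. 0"]) (use assms in auto)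
  then show ?thesis by simp
qed

lemma IBP0:
  fixes w :: "R4 \<Rightarrow> real"
  assumes der: "\<And>y. (w has_derivative W y) (at y)"
    and cont: "continuous_on UNIV (\<lambda>y. W y (axis i 1))"
    and K: "compact K" "\<And>y. y \<notin> K \<Longrightarrow> w y = 0"
  shows "(LINT y|lebesgue. W y (axis i 1)) = 0"
proof -
  let ?e = "axis i 1 :: R4"
  let ?D = "\<lambda>y. W y ?e"
  have wc: "continuous_on UNIV w"
  proof (rule continuous_at_imp_continuous_on, intro ballI)
    fix y show "isCont w y" using has_derivative_continuous[OF der[of y]] .
  qed
  have Dz: "?D y = 0" if "y \<notin> K" for y
  proof -
    have "((\<lambda>_. 0::real) has_derivative (\<lambda>_. 0)) (at y)" by simp
    moreover have "open (- K)" using K(1) compact_imp_closed by blast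
    moreover have "y \<in> - K" using that by simp
    moreover have "\<And>z. z \<in> - K \<Longrightarrow> 0 = w z" using K(2) by simp
    ultimately have "(w has_derivative (\<lambda>_. 0)) (at y)"
      by (rule has_derivative_transform_within_open)
    with der[of y] have "W y = (\<lambda>_. 0)" by (rule has_derivative_unique)
    then show ?thesis by simp
  qed
  obtain M where M: "\<And>y. \<bar>?D y\<bar> \<le> M" using bdd_cs[OF cont K(1) Dz] by blast
  obtain R where R: "K \<subseteq> cbox (-R) R"
    using bounded_subset_cbox_symmetric compact_imp_bounded K(1) by metis
  define R1 where "R1 = R + (\<chi> k. 1)"
  define h where "h n = 1 / (real n + 1)" for n :: nat
  have h: "h n > 0" "h n \<le> 1" for n by (auto simp: h_def)
  define q where "q n y = (w (y + h n *\<^sub>R ?e) - w y) / h n" for n y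
  have wK: "w y = 0" if "y \<notin> cbox (-R) R" for y
  proof -
    have "y \<notin> K" using R that by (meson subsetD)
    then show ?thesis by (rule K(2))
  qed
  have wR1: "w (y + c *\<^sub>R ?e) = 0" if "y \<notin> cbox (-R1) R1" "\<bar>c\<bar> \<le> 1" for y c
    by (rule wK, rule out_box) (use that in \<open>simp_all add: R1_def\<close>)
  have trc: "continuous_on UNIV (\<lambda>y. w (y + c *\<^sub>R ?e))" for c
    by (intro continuous_on_compose2[OF wc] continuous_intros) auto
  have qc: "continuous_on UNIV (q n)" for n
    unfolding q_def using h(1)[of n] by (intro continuous_intros trc wc) auto
  have ab: "\<bar>h n\<bar> \<le> 1" for n using h[of n] by simp
  have int_tr: "integrable lebesgue (\<lambda>y. w (y + h n *\<^sub>R ?e))" for n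
    by (rule cs_integrable[OF trc compact_cbox[of "-R1" R1]]) (erule wR1[OF _ ab])
  have int_w: "integrable lebesgue w" by (rule cs_integrable[OF wc K])
  have q0: "(LINT y|lebesgue. q n y) = 0" for n
  proof -
    have "(LINT y|lebesgue. q n y) = (LINT y|lebesgue. w (y + h n *\<^sub>R ?e) - w y) / h n"
      unfolding q_def by simp
    also have "(LINT y|lebesgue. w (y + h n *\<^sub>R ?e) - w y) = (LINT y|lebesgue. w (y + h n *\<^sub>R ?e)) - (LINT y|lebesgue. w y)"
      by (rule Bochner_Integration.integral_diff[OF int_tr int_w])
    also have "(LINT y|lebesgue. w (y + h n *\<^sub>R ?e)) = (LINT y|lebesgue. w y)"
      using integral_transl[of w "h n *\<^sub>R ?e"] cont_meas[OF wc] by (simp add: add.commute)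
    finally show ?thesis by simp
  qed
  have "(\<lambda>n. LINT y|lebesgue. q n y) \<longlonglongrightarrow> (LINT y|lebesgue. ?D y)"
  proof (rule integral_dominated_convergence[where w="\<lambda>y. M * indicator (cbox (-R1) R1) y"])
    show "?D \<in> borel_measurable lebesgue" by (rule cont_meas[OF cont])
    show "q n \<in> borel_measurable lebesgue" for n by (rule cont_meas[OF qc])
    show "integrable lebesgue (\<lambda>y. M * indicator (cbox (-R1) R1) y)"
      using int_ind_cbox by simp
    show "AE y in lebesgue. (\<lambda>n. q n y) \<longlonglongrightarrow> ?D y"
    proof (intro AE_I2)
      fix y
      have d: "((\<lambda>t. w (y + t *\<^sub>R ?e)) has_real_derivative ?D y) (at 0)"
        using line_deriv[OF der, of y ?e 0] by simp
      then have lim: "((\<lambda>t. (w (y + t *\<^sub>R ?e) - w y) / t) \<longlongrightarrow> ?D y) (at 0)"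
        unfolding has_field_derivative_iff by simp
      have hl: "filterlim h (at 0) sequentially"
      proof (rule filterlim_atI)
        show "h \<longlonglongrightarrow> 0"
          unfolding h_def using LIMSEQ_inverse_real_of_nat by (simp add: inverse_eq_divide add.commute)
        show "\<forall>\<^sub>F n in sequentially. h n \<noteq> 0" using h(1) by (simp add: less_imp_neq[symmetric])
      qed
      show "(\<lambda>n. q n y) \<longlonglongrightarrow> ?D y"
        unfolding q_def using filterlim_compose[OF lim hl] by simp
    qed
    show "AE y in lebesgue. norm (q n y) \<le> M * indicator (cbox (-R1) R1) y" for n
    proof (intro AE_I2)
      fix y
      show "norm (q n y) \<le> M * indicator (cbox (-R1) R1) y"
      proof (cases "y \<in> cbox (-R1) R1")
        case True
        have "\<forall>t. 0 \<le> t \<and> t \<le> h n \<longrightarrow> ((\<lambda>t. w (y + t *\<^sub>R ?e)) has_real_derivative ?D (y + t *\<^sub>R ?e)) (at t)"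
          by (intro allI impI line_deriv[OF der])
        then obtain z where "w (y + h n *\<^sub>R ?e) - w (y + 0 *\<^sub>R ?e) = (h n - 0) * ?D (y + z *\<^sub>R ?e)"
          using MVT2[OF h(1)[of n], of "\<lambda>t. w (y + t *\<^sub>R ?e)" "\<lambda>t. ?D (y + t *\<^sub>R ?e)"] by blast
        then have "q n y = ?D (y + z *\<^sub>R ?e)" unfolding q_def using h(1)[of n] by simp
        then show ?thesis using M True by simp
      next
        case False
        then have "w (y + h n *\<^sub>R ?e) = 0" "w (y + 0 *\<^sub>R ?e) = 0"
          using wR1[OF False ab[of n]] wR1[OF False, of 0] by auto
        then show ?thesis using False by (simp add: q_def)
      qed
    qed
  qed
  then have "(\<lambda>n. 0::real) \<longlonglongrightarrow> (LINT y|lebesgue. ?D y)" using q0 by simp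
  then show ?thesis using LIMSEQ_unique tendsto_const by metis
qed

definition psi :: "R4 \<Rightarrow> real" where "psi = bump 0 (\<chi> k. 1) 0"
definition Gpsi :: "R4 \<Rightarrow> R4" where "Gpsi x = (\<chi> i. pd i psi x)"

lemma psi_SC: "psi \<in> SC" unfolding psi_def by (rule bump_SC)
lemma psi_test: "test_fn psi" unfolding psi_def by (rule bump_test)
lemma psi_cont: "continuous_on UNIV psi" by (rule SC_continuous[OF psi_SC])
lemma pd_psi_cont: "continuous_on UNIV (pd i psi)" by (rule SC_continuous[OF SC_pd[OF psi_SC]])

lemma Gpsi_cont: "continuous_on UNIV Gpsi"
  unfolding Gpsi_def by (intro continuous_on_vec_lambda pd_psi_cont)

lemma psi_supp: "x \<notin> closure {x. psi x \<noteq> 0} \<Longrightarrow> Gpsi x = 0"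
proof -
  assume a: "x \<notin> closure {x. psi x \<noteq> 0}"
  have "pd i psi x = 0" for i using supp_pd_zero[OF a] .
  then show "Gpsi x = 0" unfolding Gpsi_def by (simp add: vec_eq_iff)
qed

lemma psi_center: "psi (\<chi> k. 1/2) > 0"
proof -
  have "\<forall>k\<in>UNIV. gD 0 ((((\<chi> k. 1/2)::R4)$k - (0::R4)$k) * (real 0 + 1)) * gD 0 ((((\<chi> k. 1)::R4)$k - ((\<chi> k. 1/2)::R4)$k) * (real 0 + 1)) > 0"
    by (simp add: gD0)
  then show ?thesis unfolding psi_def bump_def by (intro prod_pos) blast
qed

lemma cont_AE_zero:
  fixes f :: "R4 \<Rightarrow> real"
  assumes "continuous_on UNIV f" "AE x in lebesgue. f x = 0"
  shows "f x = 0"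
proof -
  have "closed {x. f x = 0}"
    using continuous_closed_preimage_constant[OF assms(1) closed_UNIV, of 0] by simp
  moreover have "AE x \<in> UNIV in lebesgue. x \<in> {x. f x = 0}" using assms(2) by simp
  ultimately have "x \<in> {x. f x = 0}"
    using mem_closed_if_AE_lebesgue_open[of UNIV "{x. f x = 0}" x] by simp
  then show ?thesis by simp
qed

lemma IBP:
  assumes "test_fn \<phi>"
  shows "(LINT x|lebesgue. psi x * pd i \<phi> x) = - (LINT x|lebesgue. pd i psi x * \<phi> x)"
proof -
  obtain F where F: "\<And>x. (psi has_derivative F x) (at x)" using SC_deriv[OF psi_SC] by blast
  have pdpsi: "pd i psi x = F x (axis i 1)" for x using pd_eq[OF F] .
  have phid: "\<phi> differentiable (at x)" for x
  proof -
    have "pderivs [] \<phi> differentiable (at x)" using assms unfolding test_fn_def smooth_def by blast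
    then show ?thesis by simp
  qed
  define P where "P x = frechet_derivative \<phi> (at x)" for x
  have P: "(\<phi> has_derivative P x) (at x)" for x
    unfolding P_def using phid frechet_derivative_works by blast
  have pdphi: "pd i \<phi> x = P x (axis i 1)" for x using pd_eq[OF P] .
  let ?K = "closure {x. \<phi> x \<noteq> 0}"
  have K: "compact ?K" using assms unfolding test_fn_def by blast
  have phic: "continuous_on UNIV \<phi>" by (rule tf_cont[OF assms])
  have pdphic: "continuous_on UNIV (pd i \<phi>)" by (rule tf_pd_cont[OF assms])
  have der: "((\<lambda>x. psi x * \<phi> x) has_derivative (\<lambda>h. psi y * P y h + F y h * \<phi> y)) (at y)" for y
    by (rule has_derivative_mult[OF F P])
  have i0: "(LINT y|lebesgue. psi y * P y (axis i 1) + F y (axis i 1) * \<phi> y) = 0"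
  proof (rule IBP0[OF der, of i ?K])
    show "continuous_on UNIV (\<lambda>y. psi y * P y (axis i 1) + F y (axis i 1) * \<phi> y)"
      unfolding pdpsi[symmetric] pdphi[symmetric]
      by (intro continuous_intros psi_cont pd_psi_cont phic pdphic)
    show "compact ?K" by (rule K)
    show "psi y * \<phi> y = 0" if "y \<notin> ?K" for y
    proof -
      have "\<phi> y = 0" using that by (rule supp_zero)
      then show ?thesis by simp
    qed
  qed
  have int1: "integrable lebesgue (\<lambda>y. psi y * pd i \<phi> y)"
  proof (rule cs_integrable[OF _ K])
    show "continuous_on UNIV (\<lambda>y. psi y * pd i \<phi> y)" by (intro continuous_intros psi_cont pdphic)
    show "psi y * pd i \<phi> y = 0" if "y \<notin> ?K" for y
    proof -
      have "pd i \<phi> y = 0" using that by (rule supp_pd_zero)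
      then show ?thesis by simp
    qed
  qed
  have int2: "integrable lebesgue (\<lambda>y. pd i psi y * \<phi> y)"
  proof (rule cs_integrable[OF _ K])
    show "continuous_on UNIV (\<lambda>y. pd i psi y * \<phi> y)" by (intro continuous_intros pd_psi_cont phic)
    show "pd i psi y * \<phi> y = 0" if "y \<notin> ?K" for y
    proof -
      have "\<phi> y = 0" using that by (rule supp_zero)
      then show ?thesis by simp
    qed
  qed
  have "(LINT y|lebesgue. psi y * pd i \<phi> y + pd i psi y * \<phi> y) = 0"
    using i0 unfolding pdpsi pdphi .
  then have "(LINT y|lebesgue. psi y * pd i \<phi> y) + (LINT y|lebesgue. pd i psi y * \<phi> y) = 0"
    using Bochner_Integration.integral_add[OF int1 int2] by simp
  then show ?thesis by linarith
qed

lemma psi_wg: "weak_grad psi Gpsi"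
  unfolding weak_grad_def
proof (intro conjI allI impI)
  show "Gpsi \<in> borel_measurable lebesgue"
    by (intro measurable_completion) (simp add: borel_measurable_continuous_onI Gpsi_cont)
  fix \<phi> i assume "test_fn \<phi>"
  then show "(LINT x|lebesgue. psi x * pd i \<phi> x) = - (LINT x|lebesgue. Gpsi x $ i * \<phi> x)"
    unfolding Gpsi_def by (simp add: IBP)
qed

lemma psi_K: "compact (closure {x. psi x \<noteq> 0})" using psi_test unfolding test_fn_def by blast

lemma psi_Gint: "integrable lebesgue (\<lambda>x. (norm (Gpsi x))\<^sup>2)"
proof (rule cs_integrable[OF _ psi_K])
  show "continuous_on UNIV (\<lambda>x. (norm (Gpsi x))\<^sup>2)" by (intro continuous_intros Gpsi_cont)
  show "(norm (Gpsi y))\<^sup>2 = 0" if "y \<notin> closure {x. psi x \<noteq> 0}" for y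
  proof -
    have "Gpsi y = 0" using that by (rule psi_supp)
    then show ?thesis by simp
  qed
qed

lemma psi_D12: "D12 psi"
  unfolding D12_def
proof (intro conjI exI)
  show "psi \<in> borel_measurable lebesgue" by (rule cont_meas[OF psi_cont])
  show "integrable lebesgue (\<lambda>x. (psi x)^4)"
  proof (rule cs_integrable[OF _ psi_K])
    show "continuous_on UNIV (\<lambda>x. (psi x)^4)" by (intro continuous_intros psi_cont)
    show "(psi y)^4 = 0" if "y \<notin> closure {x. psi x \<noteq> 0}" for y
    proof -
      have "psi y = 0" using that by (rule supp_zero)
      then show ?thesis by simp
    qed
  qed
  show "weak_grad psi Gpsi" by (rule psi_wg)
  show "integrable lebesgue (\<lambda>x. (norm (Gpsi x))\<^sup>2)" by (rule psi_Gint)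
qed

lemma psi_nonzero: "nonzero psi"
  unfolding nonzero_def
proof
  assume "AE x in lebesgue. psi x = 0"
  then have "psi (\<chi> k. 1/2) = 0" by (rule cont_AE_zero[OF psi_cont])
  then show False using psi_center by simp
qed

lemma psi_L4p: "L4p psi > 0"
  using L4p_zero_iff[OF psi_D12] psi_nonzero L4p_nonneg[of psi] by linarith

lemma psi_dir: "dir psi > 0"
proof -
  have d: "dir psi = (LINT x|lebesgue. (norm (Gpsi x))\<^sup>2)"
    by (rule dir_eq[OF psi_D12 psi_wg psi_Gint])
  have "dir psi \<noteq> 0"
  proof
    assume "dir psi = 0"
    then have "AE x in lebesgue. (norm (Gpsi x))\<^sup>2 = 0"
      unfolding d by (subst (asm) integral_nonneg_eq_0_iff_AE) (use psi_Gint in auto)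
    then have z: "(norm (Gpsi x))\<^sup>2 = 0" for x
      by (rule cont_AE_zero[rotated]) (auto intro!: continuous_intros Gpsi_cont)
    obtain F where F: "\<And>x. (psi has_derivative F x) (at x)" using SC_deriv[OF psi_SC] by blast
    have F0: "F x = (\<lambda>h. 0)" for x
    proof (rule linear_eq_stdbasis)
      show "linear (F x)" using F has_derivative_linear by blast
      show "linear (\<lambda>h::R4. 0::real)" by (rule linear_zero)
      fix b :: R4 assume "b \<in> Basis"
      then obtain i where b: "b = axis i 1" using axis_inverse by blast
      have "Gpsi x = 0" using z[of x] by simp
      then have "pd i psi x = 0" unfolding Gpsi_def by (simp add: vec_eq_iff)
      then show "F x b = 0" using pd_eq[OF F] b by simp
    qed
    have "\<exists>c. \<forall>x\<in>UNIV. psi x = c"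
      by (rule has_derivative_zero_constant[of UNIV]) (use F F0 in auto)
    then obtain c where c: "\<And>x. psi x = c" by blast
    have "psi (\<chi> k. 3) = 0"
      unfolding psi_def by (rule ccontr, drule bump_supp) (simp add: mem_box_cart)
    then show False using psi_center c by simp
  qed
  then show ?thesis using dir_nonneg[of psi] by linarith
qed

lemma quart_sum: "((a::real) + b)^4 \<le> 8 * (a^4 + b^4)"
proof -
  have s: "(a + b)\<^sup>2 \<le> 2 * (a\<^sup>2 + b\<^sup>2)"
  proof -
    have "2 * (a\<^sup>2 + b\<^sup>2) - (a + b)\<^sup>2 = (a - b)\<^sup>2" by (simp add: power2_eq_square algebra_simps)
    then show ?thesis using zero_le_power2[of "a - b"] by linarith
  qed
  have s2: "(a\<^sup>2 + b\<^sup>2)\<^sup>2 \<le> 2 * ((a\<^sup>2)\<^sup>2 + (b\<^sup>2)\<^sup>2)"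
  proof -
    have "2 * ((a\<^sup>2)\<^sup>2 + (b\<^sup>2)\<^sup>2) - (a\<^sup>2 + b\<^sup>2)\<^sup>2 = (a\<^sup>2 - b\<^sup>2)\<^sup>2" by (simp add: power2_eq_square algebra_simps)
    then show ?thesis using zero_le_power2[of "a\<^sup>2 - b\<^sup>2"] by linarith
  qed
  have "(a + b)^4 = ((a + b)\<^sup>2)\<^sup>2" by simp
  also have "\<dots> \<le> (2 * (a\<^sup>2 + b\<^sup>2))\<^sup>2" using s by (intro power_mono) auto
  also have "\<dots> = 4 * (a\<^sup>2 + b\<^sup>2)\<^sup>2" by algebra
  also have "\<dots> \<le> 4 * (2 * ((a\<^sup>2)\<^sup>2 + (b\<^sup>2)\<^sup>2))" using s2 by simp
  also have "\<dots> = 8 * (a^4 + b^4)" by simp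
  finally show ?thesis .
qed

lemma quart_lower: "(a::real)^4 \<le> 8 * (a + b)^4 + 8 * b^4"
  using quart_sum[of "a + b" "- b"] by simp

lemma abs_le_4: "\<bar>y::real\<bar> \<le> 1 + y^4"
proof (cases "\<bar>y\<bar> \<le> 1")
  case True
  have "0 \<le> y^4" by simp
  then show ?thesis using True by linarith
next
  case False
  have "\<bar>y\<bar> * 1 \<le> \<bar>y\<bar> * \<bar>y\<bar>" using False by (intro mult_left_mono) auto
  then have a: "\<bar>y\<bar> \<le> y\<^sup>2" by (simp add: power2_eq_square)
  have "y\<^sup>2 * 1 \<le> y\<^sup>2 * y\<^sup>2" using a False by (intro mult_left_mono) auto
  then have "y\<^sup>2 \<le> y^4" by (simp add: power2_eq_square power4_eq_xxxx mult.assoc)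
  then show ?thesis using a by linarith
qed

lemma int_u_pd:
  assumes "D12 u" "test_fn \<phi>"
  shows "integrable lebesgue (\<lambda>x. u x * pd i \<phi> x)"
proof (rule int_cs[OF D12_meas[OF assms(1)] D12_int4[OF assms(1)] abs_le_4 tf_pd_cont[OF assms(2)]])
  show "compact (closure {x. \<phi> x \<noteq> 0})" using assms(2) unfolding test_fn_def by blast
  show "pd i \<phi> x = 0" if "x \<notin> closure {x. \<phi> x \<noteq> 0}" for x using that by (rule supp_pd_zero)
qed

lemma wg_add:
  assumes u: "D12 u" "weak_grad u G" "integrable lebesgue (\<lambda>x. (norm (G x))\<^sup>2)"
    and v: "D12 v" "weak_grad v H" "integrable lebesgue (\<lambda>x. (norm (H x))\<^sup>2)"
  shows "weak_grad (\<lambda>x. u x + v x) (\<lambda>x. G x + H x)"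
  unfolding weak_grad_def
proof (intro conjI allI impI)
  show "(\<lambda>x. G x + H x) \<in> borel_measurable lebesgue"
    using wg_meas_vec[OF u(2)] wg_meas_vec[OF v(2)] by (rule borel_measurable_add)
  fix \<phi> i assume \<phi>: "test_fn \<phi>"
  have eu: "(LINT x|lebesgue. u x * pd i \<phi> x) = - (LINT x|lebesgue. G x $ i * \<phi> x)"
    using u(2) \<phi> unfolding weak_grad_def by simp
  have ev: "(LINT x|lebesgue. v x * pd i \<phi> x) = - (LINT x|lebesgue. H x $ i * \<phi> x)"
    using v(2) \<phi> unfolding weak_grad_def by simp
  have "(LINT x|lebesgue. (u x + v x) * pd i \<phi> x) = (LINT x|lebesgue. u x * pd i \<phi> x + v x * pd i \<phi> x)"
    by (simp add: algebra_simps)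
  also have "\<dots> = (LINT x|lebesgue. u x * pd i \<phi> x) + (LINT x|lebesgue. v x * pd i \<phi> x)"
    by (rule Bochner_Integration.integral_add[OF int_u_pd[OF u(1) \<phi>] int_u_pd[OF v(1) \<phi>]])
  also have "\<dots> = - ((LINT x|lebesgue. G x $ i * \<phi> x) + (LINT x|lebesgue. H x $ i * \<phi> x))"
    using eu ev by simp
  also have "(LINT x|lebesgue. G x $ i * \<phi> x) + (LINT x|lebesgue. H x $ i * \<phi> x)
      = (LINT x|lebesgue. G x $ i * \<phi> x + H x $ i * \<phi> x)"
    by (rule Bochner_Integration.integral_add[symmetric, OF int_Gphi[OF u(2,3) \<phi>] int_Gphi[OF v(2,3) \<phi>]])
  also have "\<dots> = (LINT x|lebesgue. (G x + H x) $ i * \<phi> x)"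
    by (simp add: algebra_simps)
  finally show "(LINT x|lebesgue. (u x + v x) * pd i \<phi> x) = - (LINT x|lebesgue. (G x + H x) $ i * \<phi> x)" .
qed

lemma norm_sum_sq: "(norm (a + b :: R4))\<^sup>2 \<le> 2 * (norm a)\<^sup>2 + 2 * (norm b)\<^sup>2"
proof -
  have "norm (a + b) \<le> norm a + norm b" by (rule norm_triangle_ineq)
  then have "(norm (a + b))\<^sup>2 \<le> (norm a + norm b)\<^sup>2" by (intro power_mono) auto
  also have "\<dots> \<le> 2 * (norm a)\<^sup>2 + 2 * (norm b)\<^sup>2"
  proof -
    have "2 * (norm a)\<^sup>2 + 2 * (norm b)\<^sup>2 - (norm a + norm b)\<^sup>2 = (norm a - norm b)\<^sup>2"
      by (simp add: power2_eq_square algebra_simps)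
    then show ?thesis using zero_le_power2[of "norm a - norm b"] by linarith
  qed
  finally show ?thesis .
qed

lemma D12_add:
  assumes u: "D12 u" "weak_grad u G" "integrable lebesgue (\<lambda>x. (norm (G x))\<^sup>2)"
    and v: "D12 v" "weak_grad v H" "integrable lebesgue (\<lambda>x. (norm (H x))\<^sup>2)"
  shows "D12 (\<lambda>x. u x + v x)" "dir (\<lambda>x. u x + v x) = (LINT x|lebesgue. (norm (G x + H x))\<^sup>2)"
proof -
  have wg: "weak_grad (\<lambda>x. u x + v x) (\<lambda>x. G x + H x)" by (rule wg_add[OF u v])
  have ig: "integrable lebesgue (\<lambda>x. (norm (G x + H x))\<^sup>2)"
  proof (rule Bochner_Integration.integrable_bound[where f="\<lambda>x. 2 * (norm (G x))\<^sup>2 + 2 * (norm (H x))\<^sup>2"])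
    show "integrable lebesgue (\<lambda>x. 2 * (norm (G x))\<^sup>2 + 2 * (norm (H x))\<^sup>2)" using u(3) v(3) by simp
    show "(\<lambda>x. (norm (G x + H x))\<^sup>2) \<in> borel_measurable lebesgue"
      using wg_meas_vec[OF wg] by (rule norm_sq_meas)
    show "AE x in lebesgue. norm ((norm (G x + H x))\<^sup>2) \<le> norm (2 * (norm (G x))\<^sup>2 + 2 * (norm (H x))\<^sup>2)"
      using norm_sum_sq by (intro AE_I2) simp
  qed
  have i4: "integrable lebesgue (\<lambda>x. (u x + v x)^4)"
  proof (rule Bochner_Integration.integrable_bound[where f="\<lambda>x. 8 * ((u x)^4 + (v x)^4)"])
    show "integrable lebesgue (\<lambda>x. 8 * ((u x)^4 + (v x)^4))" using D12_int4[OF u(1)] D12_int4[OF v(1)] by simp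
    show "(\<lambda>x. (u x + v x)^4) \<in> borel_measurable lebesgue"
      using D12_meas[OF u(1)] D12_meas[OF v(1)] by (intro borel_measurable_power borel_measurable_add)
    show "AE x in lebesgue. norm ((u x + v x)^4) \<le> norm (8 * ((u x)^4 + (v x)^4))"
      using quart_sum by (intro AE_I2) simp
  qed
  show D: "D12 (\<lambda>x. u x + v x)"
    unfolding D12_def using D12_meas[OF u(1)] D12_meas[OF v(1)] i4 wg ig by auto
  show "dir (\<lambda>x. u x + v x) = (LINT x|lebesgue. (norm (G x + H x))\<^sup>2)"
    by (rule dir_eq[OF D wg ig])
qed

lemma Sob_ineq:
  assumes "D12 u"
  shows "Sob * sqrt (L4p u) \<le> dir u"
proof (cases "L4p u = 0")
  case True
  then show ?thesis using dir_nonneg[of u] by simp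
next
  case False
  let ?L = "L4p u"
  have L: "?L > 0" using False L4p_nonneg[of u] by linarith
  define c where "c = 1 / sqrt (sqrt ?L)"
  have c2: "c\<^sup>2 = 1 / sqrt ?L" using L by (simp add: c_def power_divide)
  have c4: "c^4 = 1 / ?L"
  proof -
    have "c^4 = (c\<^sup>2)\<^sup>2" by simp
    also have "\<dots> = 1 / ?L" using L by (simp add: c2 power_divide)
    finally show ?thesis .
  qed
  have D: "D12 (\<lambda>x. c * u x)" by (rule D12_scale(1)[OF assms])
  have "L4p (\<lambda>x. c * u x) = 1" using D12_scale(3)[OF assms, of c] c4 L by simp
  then have "dir (\<lambda>x. c * u x) \<in> {dir u | u. D12 u \<and> L4p u = 1}"
    using D by (intro CollectI exI[of _ "\<lambda>x. c * u x"]) simp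
  moreover have "bdd_below {dir u | u. D12 u \<and> L4p u = 1}"
    by (rule bdd_belowI[of _ 0]) (auto simp: dir_nonneg)
  ultimately have "Sob \<le> dir (\<lambda>x. c * u x)" unfolding Sob_def by (rule cInf_lower)
  also have "\<dots> = dir u / sqrt ?L" using D12_scale(2)[OF assms, of c] c2 by simp
  finally show ?thesis using L by (simp add: field_simps)
qed

lemma nehari_pair:
  assumes b: "\<beta> > 1" and z: "D12 z" "dir z > 0" "L4p z > 0"
  shows "\<exists>p\<in>Nstar \<beta>. (\<lambda>(u, v). energy \<beta> u v) p = (dir z)\<^sup>2 / (2 * (1 + \<beta>) * L4p z)"
proof -
  define d where "d = dir z"
  define L where "L = L4p z"
  have d: "d > 0" and L: "L > 0" using z by (auto simp: d_def L_def)
  define s where "s = d / ((1 + \<beta>) * L)"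
  have s: "s > 0" using d L b by (simp add: s_def)
  have ne: "L + L * \<beta> > 0" using L b by (simp add: add_pos_pos)
  have sL: "(1 + \<beta>) * s * L = d" using L b ne by (simp add: s_def field_simps)
  define t where "t = sqrt s"
  have t2: "t\<^sup>2 = s" using s by (simp add: t_def)
  have t4: "t^4 = s\<^sup>2" using t2 by (metis power_mult numeral_times_numeral semiring_norm(12) power2_eq_square mult_2_right numeral_Bit0)
  define u where "u x = t * z x" for x
  have Du: "D12 u" unfolding u_def by (rule D12_scale(1)[OF z(1)])
  have du: "dir u = s * d" unfolding u_def d_def using D12_scale(2)[OF z(1), of t] t2 by simp
  have Lu: "L4p u = s\<^sup>2 * L" unfolding u_def L_def using D12_scale(3)[OF z(1), of t] t4 by simp
  have cu: "cross u u = s\<^sup>2 * L" unfolding u_def L_def using cross_self_scale[of t z] t4 by simp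
  have Lu_pos: "L4p u > 0" using Lu s L by simp
  have nz: "nonzero u" using L4p_zero_iff[OF Du] Lu_pos by simp
  have eq: "dir u - L4p u - \<beta> * cross u u = 0"
  proof -
    have "dir u - L4p u - \<beta> * cross u u = s * (d - (1 + \<beta>) * s * L)"
      unfolding du Lu cu by (simp add: power2_eq_square algebra_simps)
    then show ?thesis using sL by simp
  qed
  have mem: "(u, u) \<in> Nstar \<beta>" unfolding Nstar_def using Du nz eq by simp
  have "energy \<beta> u u = s * d / 2"
  proof -
    have "energy \<beta> u u = s * d - (1 + \<beta>) * s * L * s / 2"
      unfolding energy_def du Lu cu by (simp add: power2_eq_square algebra_simps)
    then show ?thesis using sL by simp
  qed
  also have "\<dots> = d\<^sup>2 / (2 * (1 + \<beta>) * L)" using L b by (simp add: s_def power2_eq_square field_simps)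
  finally show ?thesis using mem unfolding d_def L_def by force
qed

lemma Sset_ne: "\<exists>w. D12 w \<and> L4p w = 1"
proof -
  let ?L = "L4p psi"
  have L: "?L > 0" by (rule psi_L4p)
  define c where "c = 1 / sqrt (sqrt ?L)"
  have c4: "c^4 = 1 / ?L"
  proof -
    have "c\<^sup>2 = 1 / sqrt ?L" using L by (simp add: c_def power_divide)
    then have "(c\<^sup>2)\<^sup>2 = 1 / ?L" using L by (simp add: power_divide)
    then show ?thesis by simp
  qed
  have "D12 (\<lambda>x. c * psi x)" by (rule D12_scale(1)[OF psi_D12])
  moreover have "L4p (\<lambda>x. c * psi x) = 1" using D12_scale(3)[OF psi_D12, of c] c4 L by simp
  ultimately show ?thesis by blast
qed

lemma Sob_nonneg: "Sob \<ge> 0"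
  unfolding Sob_def
proof (rule cInf_greatest)
  show "{dir u |u. D12 u \<and> L4p u = 1} \<noteq> {}" using Sset_ne by blast
  show "\<And>x. x \<in> {dir u |u. D12 u \<and> L4p u = 1} \<Longrightarrow> 0 \<le> x" using dir_nonneg by blast
qed

lemma lower_bound:
  assumes b: "\<beta> > 1" and uv: "(u, v) \<in> Mstar \<beta>"
  shows "Sob\<^sup>2 / (2 * (1 + \<beta>)) \<le> energy \<beta> u v"
proof -
  have Du: "D12 u" and Dv: "D12 v" and nz: "nonzero u \<or> nonzero v"
    and neh: "dir u + dir v - L4p u - L4p v - 2 * \<beta> * cross u v = 0"
    using uv unfolding Mstar_def by auto
  define A where "A = L4p u"
  define B where "B = L4p v"
  define a where "a = sqrt A"
  define bb where "bb = sqrt B"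
  define C where "C = cross u v"
  define D where "D = dir u + dir v"
  have A0: "A \<ge> 0" unfolding A_def by (rule L4p_nonneg)
  have B0: "B \<ge> 0" unfolding B_def by (rule L4p_nonneg)
  have a0: "a \<ge> 0" and b0: "bb \<ge> 0" using A0 B0 by (auto simp: a_def bb_def)
  have aA: "a\<^sup>2 = A" using A0 by (simp add: a_def)
  have bB: "bb\<^sup>2 = B" using B0 by (simp add: bb_def)
  have C: "C \<le> a * bb" unfolding C_def a_def bb_def A_def B_def by (rule cross_le[OF Du Dv])
  have DE: "D = A + B + 2 * \<beta> * C" using neh by (simp add: D_def A_def B_def C_def)
  have en: "energy \<beta> u v = D / 4"
  proof -
    have "energy \<beta> u v = D / 2 - (A + B + 2 * \<beta> * C) / 4"
      unfolding energy_def D_def A_def B_def C_def by simp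
    also have "\<dots> = D / 2 - D / 4" by (simp only: DE[symmetric])
    finally show ?thesis by simp
  qed
  have up: "D \<le> (1 + \<beta>) * (a + bb)\<^sup>2 / 2"
  proof -
    have "D \<le> a\<^sup>2 + bb\<^sup>2 + 2 * \<beta> * (a * bb)"
      using DE C aA bB b by (simp add: mult_left_mono)
    also have "\<dots> \<le> (1 + \<beta>) * (a + bb)\<^sup>2 / 2"
    proof -
      have "(1 + \<beta>) * (a + bb)\<^sup>2 / 2 - (a\<^sup>2 + bb\<^sup>2 + 2 * \<beta> * (a * bb)) = (\<beta> - 1) * (a - bb)\<^sup>2 / 2"
        by (simp add: power2_eq_square algebra_simps)
      moreover have "(\<beta> - 1) * (a - bb)\<^sup>2 / 2 \<ge> 0" using b by simp
      ultimately show ?thesis by linarith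
    qed
    finally show ?thesis .
  qed
  have lowS: "Sob * (a + bb) \<le> D"
    using Sob_ineq[OF Du] Sob_ineq[OF Dv] unfolding D_def a_def bb_def A_def B_def
    by (simp add: distrib_left)
  have apb: "a + bb > 0"
  proof -
    have "A > 0 \<or> B > 0" using nz L4p_zero_iff[OF Du] L4p_zero_iff[OF Dv] A0 B0
      unfolding A_def B_def by force
    then have "a > 0 \<or> bb > 0" by (auto simp: a_def bb_def)
    then show ?thesis using a0 b0 by linarith
  qed
  have S0: "Sob \<ge> 0" by (rule Sob_nonneg)
  have "Sob\<^sup>2 / (2 * (1 + \<beta>)) \<le> D / 4"
  proof (cases "Sob = 0")
    case True
    have "D \<ge> 0" using dir_nonneg[of u] dir_nonneg[of v] by (simp add: D_def)
    then show ?thesis using True by simp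
  next
    case False
    then have Sp: "Sob > 0" using S0 by simp
    have Dp: "D > 0" using lowS Sp apb by (smt (verit) mult_pos_pos)
    have "(Sob * (a + bb))\<^sup>2 \<le> D\<^sup>2" using lowS Sp apb by (intro power_mono) auto
    moreover have "(Sob * (a + bb))\<^sup>2 = Sob\<^sup>2 * (a + bb)\<^sup>2" by algebra
    ultimately have "Sob\<^sup>2 * (a + bb)\<^sup>2 \<le> D\<^sup>2" by simp
    then have "Sob\<^sup>2 * (a + bb)\<^sup>2 \<le> D * D" by (simp only: power2_eq_square)
    moreover have "2 * D / (1 + \<beta>) \<le> (a + bb)\<^sup>2" using up b by (simp add: field_simps)
    ultimately have "Sob\<^sup>2 * (2 * D / (1 + \<beta>)) \<le> D * D"
      by (meson mult_left_mono order_trans zero_le_power2)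
    moreover have "Sob\<^sup>2 * (2 * D / (1 + \<beta>)) = (Sob\<^sup>2 * 2 / (1 + \<beta>)) * D" by simp
    ultimately have "(Sob\<^sup>2 * 2 / (1 + \<beta>)) * D \<le> D * D" by linarith
    then have "Sob\<^sup>2 * 2 / (1 + \<beta>) \<le> D" using Dp by (rule mult_right_le_imp_le)
    then show ?thesis using b by (simp add: field_simps)
  qed
  then show ?thesis unfolding en .
qed

lemma Sset_bdd: "bdd_below {dir u | u. D12 u \<and> L4p u = 1}"
  by (rule bdd_belowI[of _ 0]) (auto simp: dir_nonneg)

lemma good_case:
  assumes b: "\<beta> > 1" and pos: "\<And>w. D12 w \<Longrightarrow> L4p w = 1 \<Longrightarrow> dir w > 0" and e: "\<epsilon> > 0"
  shows "\<exists>p\<in>Nstar \<beta>. (\<lambda>(u, v). energy \<beta> u v) p < Sob\<^sup>2 / (2 * (1 + \<beta>)) + \<epsilon>"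
proof -
  let ?S = "{dir u | u. D12 u \<and> L4p u = 1}"
  have S0: "Sob \<ge> 0" by (rule Sob_nonneg)
  define \<eta> where "\<eta> = min 1 (2 * (1 + \<beta>) * \<epsilon> / (2 * Sob + 1))"
  have \<eta>: "\<eta> > 0" using e b S0 by (simp add: \<eta>_def)
  have \<eta>1: "\<eta> \<le> 1" by (simp add: \<eta>_def)
  have \<eta>2: "\<eta> * (2 * Sob + 1) \<le> 2 * (1 + \<beta>) * \<epsilon>"
  proof -
    have "\<eta> \<le> 2 * (1 + \<beta>) * \<epsilon> / (2 * Sob + 1)" by (simp add: \<eta>_def)
    then show ?thesis using S0 by (simp add: field_simps)
  qed
  have ne: "?S \<noteq> {}" using Sset_ne by blast
  have "Inf ?S < Sob + \<eta>" using \<eta> by (simp add: Sob_def)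
  then obtain x where "x \<in> ?S" "x < Sob + \<eta>" using cInf_lessD[OF ne] by blast
  then obtain w where w: "D12 w" "L4p w = 1" "dir w < Sob + \<eta>" by blast
  have dw: "dir w > 0" using pos w by blast
  have Sw: "Sob \<le> dir w" unfolding Sob_def by (rule cInf_lower[OF _ Sset_bdd]) (use w in blast)
  obtain p where p: "p \<in> Nstar \<beta>" "(\<lambda>(u, v). energy \<beta> u v) p = (dir w)\<^sup>2 / (2 * (1 + \<beta>) * L4p w)"
    using nehari_pair[OF b w(1) dw] w(2) by auto
  have "(dir w)\<^sup>2 < (Sob + \<eta>)\<^sup>2" using w(3) dw by (intro power_strict_mono) auto
  also have "(Sob + \<eta>)\<^sup>2 = Sob\<^sup>2 + \<eta> * (2 * Sob + \<eta>)" by (simp add: power2_eq_square algebra_simps)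
  also have "\<dots> \<le> Sob\<^sup>2 + \<eta> * (2 * Sob + 1)" using \<eta> \<eta>1 by simp
  also have "\<dots> \<le> Sob\<^sup>2 + 2 * (1 + \<beta>) * \<epsilon>" using \<eta>2 by simp
  finally have "(dir w)\<^sup>2 < Sob\<^sup>2 + 2 * (1 + \<beta>) * \<epsilon>" .
  then have "(dir w)\<^sup>2 / (2 * (1 + \<beta>)) < (Sob\<^sup>2 + 2 * (1 + \<beta>) * \<epsilon>) / (2 * (1 + \<beta>))"
    using b by (intro divide_strict_right_mono) auto
  also have "\<dots> = Sob\<^sup>2 / (2 * (1 + \<beta>)) + \<epsilon>" using b by (simp add: field_simps)
  finally have "(\<lambda>(u, v). energy \<beta> u v) p < Sob\<^sup>2 / (2 * (1 + \<beta>)) + \<epsilon>" using p w(2) by simp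
  then show ?thesis using p(1) by blast
qed

lemma bad_case:
  assumes b: "\<beta> > 1" and w0: "D12 w0" "L4p w0 = 1" "dir w0 = 0" and e: "\<epsilon> > 0"
  shows "\<exists>p\<in>Nstar \<beta>. (\<lambda>(u, v). energy \<beta> u v) p < \<epsilon>"
proof -
  let ?G = "grad w0"
  have g: "weak_grad w0 ?G" "integrable lebesgue (\<lambda>x. (norm (?G x))\<^sup>2)" using grad_ok w0(1) by auto
  have "(LINT x|lebesgue. (norm (?G x))\<^sup>2) = 0" using w0(3) unfolding dir_def .
  then have "AE x in lebesgue. (norm (?G x))\<^sup>2 = 0"
    by (subst (asm) integral_nonneg_eq_0_iff_AE) (use g(2) in auto)
  then have G0: "AE x in lebesgue. ?G x = 0" by eventually_elim simp
  let ?Lp = "L4p psi" and ?dp = "dir psi"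
  have Lp: "?Lp > 0" by (rule psi_L4p)
  have dp: "?dp > 0" by (rule psi_dir)
  define m where "m = min (1 / (16 * ?Lp)) ((1 + \<beta>) * \<epsilon> / (16 * ?dp\<^sup>2))"
  have m: "m > 0" using Lp dp b e by (simp add: m_def)
  have mL: "m * ?Lp \<le> 1 / 16"
  proof -
    have "m \<le> 1 / (16 * ?Lp)" by (simp add: m_def)
    then show ?thesis using Lp by (simp add: field_simps)
  qed
  have md: "16 * m * ?dp\<^sup>2 \<le> (1 + \<beta>) * \<epsilon>"
  proof -
    have "m \<le> (1 + \<beta>) * \<epsilon> / (16 * ?dp\<^sup>2)" by (simp add: m_def)
    then show ?thesis using dp by (simp add: field_simps)
  qed
  define \<delta> where "\<delta> = sqrt (sqrt m)"
  have d2: "\<delta>\<^sup>2 = sqrt m" using m by (simp add: \<delta>_def)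
  have d4: "\<delta>^4 = m"
  proof -
    have "\<delta>^4 = (\<delta>\<^sup>2)\<^sup>2" by simp
    then show ?thesis using d2 m by simp
  qed
  define v where "v x = \<delta> * psi x" for x
  have Dv: "D12 v" unfolding v_def by (rule D12_scale(1)[OF psi_D12])
  have Lv: "L4p v = m * ?Lp" unfolding v_def using D12_scale(3)[OF psi_D12, of \<delta>] d4 by simp
  have wgv: "weak_grad v (\<lambda>x. \<delta> *\<^sub>R Gpsi x)" unfolding v_def by (rule wg_scale[OF psi_wg])
  have nsq: "(norm (\<delta> *\<^sub>R Gpsi x))\<^sup>2 = \<delta>\<^sup>2 * (norm (Gpsi x))\<^sup>2" for x
    by (simp add: power_mult_distrib)
  have igv: "integrable lebesgue (\<lambda>x. (norm (\<delta> *\<^sub>R Gpsi x))\<^sup>2)"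
    unfolding nsq using psi_Gint by simp
  define z where "z x = w0 x + v x" for x
  have Dz: "D12 z" unfolding z_def by (rule D12_add(1)[OF w0(1) g Dv wgv igv])
  have "dir z = (LINT x|lebesgue. (norm (?G x + \<delta> *\<^sub>R Gpsi x))\<^sup>2)"
    unfolding z_def by (rule D12_add(2)[OF w0(1) g Dv wgv igv])
  also have "\<dots> = (LINT x|lebesgue. (norm (\<delta> *\<^sub>R Gpsi x))\<^sup>2)"
  proof (rule integral_cong_AE)
    show "(\<lambda>x. (norm (?G x + \<delta> *\<^sub>R Gpsi x))\<^sup>2) \<in> borel_measurable lebesgue"
      using wg_meas_vec[OF g(1)] wg_meas_vec[OF wgv] by (intro norm_sq_meas borel_measurable_add)
    show "(\<lambda>x. (norm (\<delta> *\<^sub>R Gpsi x))\<^sup>2) \<in> borel_measurable lebesgue"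
      using wg_meas_vec[OF wgv] by (rule norm_sq_meas)
    show "AE x in lebesgue. (norm (?G x + \<delta> *\<^sub>R Gpsi x))\<^sup>2 = (norm (\<delta> *\<^sub>R Gpsi x))\<^sup>2"
      using G0 by eventually_elim simp
  qed
  also have "\<dots> = \<delta>\<^sup>2 * ?dp"
    unfolding nsq dir_eq[OF psi_D12 psi_wg psi_Gint] by simp
  finally have dz: "dir z = sqrt m * ?dp" using d2 by simp
  have dzp: "dir z > 0" using dz m dp by simp
  have Lz: "L4p z \<ge> 1 / 16"
  proof -
    have "L4p w0 \<le> (LINT x|lebesgue. 8 * (z x)^4 + 8 * (v x)^4)"
      unfolding L4p_def
    proof (rule integral_mono)
      show "integrable lebesgue (\<lambda>x. (w0 x)^4)" by (rule D12_int4[OF w0(1)])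
      show "integrable lebesgue (\<lambda>x. 8 * (z x)^4 + 8 * (v x)^4)"
        using D12_int4[OF Dz] D12_int4[OF Dv] by simp
      show "(w0 x)^4 \<le> 8 * (z x)^4 + 8 * (v x)^4" for x
        unfolding z_def using quart_lower[of "w0 x" "v x"] by simp
    qed
    also have "\<dots> = 8 * L4p z + 8 * L4p v"
      unfolding L4p_def using D12_int4[OF Dz] D12_int4[OF Dv] by simp
    finally have "1 \<le> 8 * L4p z + 8 * (m * ?Lp)" using w0(2) Lv by simp
    then show ?thesis using mL by linarith
  qed
  have Lzp: "L4p z > 0" using Lz by linarith
  obtain p where p: "p \<in> Nstar \<beta>" "(\<lambda>(u, v). energy \<beta> u v) p = (dir z)\<^sup>2 / (2 * (1 + \<beta>) * L4p z)"
    using nehari_pair[OF b Dz dzp Lzp] by auto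
  have num: "(dir z)\<^sup>2 = m * ?dp\<^sup>2" using dz m by (simp add: power_mult_distrib)
  have "(dir z)\<^sup>2 / (2 * (1 + \<beta>) * L4p z) \<le> (m * ?dp\<^sup>2) / (2 * (1 + \<beta>) * (1/16))"
    unfolding num using b m Lz by (intro divide_left_mono mult_left_mono) auto
  also have "\<dots> = 16 * m * ?dp\<^sup>2 / (2 * (1 + \<beta>))" by simp
  also have "\<dots> \<le> (1 + \<beta>) * \<epsilon> / (2 * (1 + \<beta>))"
    using md b by (intro divide_right_mono) auto
  also have "\<dots> = \<epsilon> / 2"
  proof -
    have "1 + \<beta> \<noteq> 0" using b by simp
    then show ?thesis by (simp add: field_simps)
  qed
  also have "\<dots> < \<epsilon>" using e by simp
  finally have "(\<lambda>(u, v). energy \<beta> u v) p < \<epsilon>" using p by simp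
  then show ?thesis using p(1) by blast
qed

theorem lemma4p1:
  fixes \<beta> :: real
  assumes "\<beta> > 1"
  shows "m0 \<beta> = m2star \<beta> \<and> m2star \<beta> = Sob\<^sup>2 / (2 * (1 + \<beta>))"
proof -
  have b: "\<beta> > 1" by (rule assms)
  let ?c = "Sob\<^sup>2 / (2 * (1 + \<beta>))"
  let ?f = "\<lambda>(u, v). energy \<beta> u v"
  let ?EN = "?f ` Nstar \<beta>" and ?EM = "?f ` Mstar \<beta>"
  have NM: "Nstar \<beta> \<subseteq> Mstar \<beta>"
  proof
    fix p assume "p \<in> Nstar \<beta>"
    then obtain u v where p: "p = (u, v)" and uv: "D12 u" "D12 v" "nonzero u" "nonzero v"
      "dir u - L4p u - \<beta> * cross u v = 0" "dir v - L4p v - \<beta> * cross u v = 0"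
      unfolding Nstar_def by auto
    have "dir u + dir v - L4p u - L4p v - 2 * \<beta> * cross u v = 0" using uv(5,6) by linarith
    then show "p \<in> Mstar \<beta>" unfolding Mstar_def p using uv by simp
  qed
  then have ENM: "?EN \<subseteq> ?EM" by (rule image_mono)
  obtain p0 where "p0 \<in> Nstar \<beta>"
    using nehari_pair[OF b psi_D12 psi_dir psi_L4p] by blast
  then have ENne: "?EN \<noteq> {}" by blast
  have low: "\<And>x. x \<in> ?EM \<Longrightarrow> ?c \<le> x"
  proof -
    fix x assume "x \<in> ?EM"
    then obtain u v where "(u, v) \<in> Mstar \<beta>" "x = energy \<beta> u v" by auto
    then show "?c \<le> x" using lower_bound[OF b] by simp
  qed
  have bddM: "bdd_below ?EM" using low by (rule bdd_belowI)
  have bddN: "bdd_below ?EN" using bddM ENM by (rule bdd_below_mono)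
  have EMne: "?EM \<noteq> {}" using ENne ENM by blast
  have m0_ge: "?c \<le> m0 \<beta>" unfolding m0_def using EMne low by (rule cInf_greatest)
  have m0_le: "m0 \<beta> \<le> m2star \<beta>" unfolding m0_def m2star_def
    by (rule cInf_superset_mono[OF ENne bddM ENM])
  have m2_le: "m2star \<beta> \<le> ?c"
  proof (rule ccontr)
    assume "\<not> m2star \<beta> \<le> ?c"
    then have e: "m2star \<beta> - ?c > 0" by simp
    have "\<exists>p\<in>Nstar \<beta>. ?f p < ?c + (m2star \<beta> - ?c)"
    proof (cases "\<forall>w. D12 w \<longrightarrow> L4p w = 1 \<longrightarrow> dir w > 0")
      case True
      then show ?thesis using good_case[OF b _ e] by blast
    next
      case False
      then obtain w0 where w0: "D12 w0" "L4p w0 = 1" "\<not> dir w0 > 0" by blast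
      then have d0: "dir w0 = 0" using dir_nonneg[of w0] by linarith
      have "Sob \<le> dir w0" unfolding Sob_def
        by (rule cInf_lower[OF _ Sset_bdd]) (use w0 in blast)
      then have "Sob = 0" using d0 Sob_nonneg by linarith
      then show ?thesis using bad_case[OF b w0(1,2) d0 e] by simp
    qed
    then obtain p where p: "p \<in> Nstar \<beta>" "?f p < m2star \<beta>" by auto
    have "m2star \<beta> \<le> ?f p" unfolding m2star_def
      by (rule cInf_lower[OF _ bddN]) (use p(1) in blast)
    then show False using p(2) by linarith
  qed
  show ?thesis using m0_ge m0_le m2_le by linarith
qed

end
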